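(* Let $n,k\ge 0$ be integers with $n\ge 2k-1$. For every $\alpha\in F_n(2,k)$, the list $\mathcal{F}(\alpha)$ is suffix partitioned.
   Context: The weight of a binary word is its number of 1's. $F_n(2,k)$ is the set of binary words of length $n$ and weight $k$ containing no two consecutive 1's. A homogeneous transposition of a binary word exchanges a 1 and a 0 such that no 1 occurs strictly between the two exchanged positions. For a set $S$ of binary words of the same length and weight and $\alpha\in S$, the list obtained by applying the greedy algorithm for $S$ to $\alpha$ is built as follows: start with the list $(\alpha)$; repeatedly, for the last word $w$ of the current list, among all words obtainable from $w$ by one homogeneous transposition that lie in $S$ and do not already occur in the list, choose the one obtained by transposing the leftmost possible 1 with (among transpositions of that 1) the leftmost possible 0, and append it; stop when no such word exists. $\mathcal{F}(\alpha)$ denotes the list obtained by applying the greedy algorithm for $F_n(2,k)$ to $\alpha\in F_n(2,k)$. A list is suffix partitioned if, for every word $s$, the words of the list having suffix $s$ occupy consecutive positions. *)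

theory Defs
  imports Main "HOL-Library.Sublist"
begin

text \<open>Binary words are bool lists; True stands for the letter 1, False for 0.\<close>

definition weight :: "bool list \<Rightarrow> nat" where
  "weight w = count_list w True"

definition Fib_words :: "nat \<Rightarrow> nat \<Rightarrow> bool list set" where
  "Fib_words n k = {w. length w = n \<and> weight w = k \<and>
      (\<forall>i. Suc i < n \<longrightarrow> \<not> (w ! i \<and> w ! Suc i))}"

definition hom_trans_ok :: "bool list \<Rightarrow> nat \<Rightarrow> nat \<Rightarrow> bool" where
  "hom_trans_ok w i j \<longleftrightarrow> i < length w \<and> j < length w \<and> w ! i \<and> \<not> w ! j \<and>
      (\<forall>m. min i j < m \<and> m < max i j \<longrightarrow> \<not> w ! m)"

definition hom_trans :: "bool list \<Rightarrow> nat \<Rightarrow> nat \<Rightarrow> bool list" where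
  "hom_trans w i j = w[i := False, j := True]"

definition greedy_cands :: "bool list set \<Rightarrow> bool list list \<Rightarrow> bool list \<Rightarrow> (nat \<times> nat) set" where
  "greedy_cands S L w = {(i, j). hom_trans_ok w i j \<and> hom_trans w i j \<in> S \<and> hom_trans w i j \<notin> set L}"

definition greedy_next :: "bool list set \<Rightarrow> bool list list \<Rightarrow> bool list \<Rightarrow> bool list option" where
  "greedy_next S L w =
     (let C = greedy_cands S L w in
      if C = {} then None
      else let i0 = (LEAST i. \<exists>j. (i, j) \<in> C);
               j0 = (LEAST j. (i0, j) \<in> C)
           in Some (hom_trans w i0 j0))"

fun greedy_aux :: "bool list set \<Rightarrow> nat \<Rightarrow> bool list list \<Rightarrow> bool list list" where
  "greedy_aux S 0 L = L"
| "greedy_aux S (Suc f) L =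
     (case greedy_next S L (last L) of
        None \<Rightarrow> L
      | Some v \<Rightarrow> greedy_aux S f (L @ [v]))"

text \<open>The greedy list for S started at alpha. The fuel card S is never exhausted
  before the algorithm stops when alpha is in the finite set S, since the list consists of
  distinct elements of S.\<close>
definition greedy :: "bool list set \<Rightarrow> bool list \<Rightarrow> bool list list" where
  "greedy S \<alpha> = greedy_aux S (card S) [\<alpha>]"

definition Fgreedy :: "nat \<Rightarrow> nat \<Rightarrow> bool list \<Rightarrow> bool list list" where
  "Fgreedy n k \<alpha> = greedy (Fib_words n k) \<alpha>"

definition suffix_partitioned :: "bool list list \<Rightarrow> bool" where
  "suffix_partitioned L \<longleftrightarrow>
     (\<forall>s p q r. p \<le> q \<and> q \<le> r \<and> r < length L \<and> suffix s (L ! p) \<and> suffix s (L ! r)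
        \<longrightarrow> suffix s (L ! q))"

end

theory Submission
  imports Defs
begin


definition steps_ok :: "bool list set \<Rightarrow> bool list list \<Rightarrow> bool list list \<Rightarrow> bool" where
  "steps_ok S Ov L \<longleftrightarrow> (\<forall>t. Suc t < length L \<longrightarrow>
      greedy_next S (Ov @ take (Suc t) L) (L ! t) = Some (L ! Suc t))"

definition run :: "bool list set \<Rightarrow> bool list list \<Rightarrow> bool" where
  "run S L \<longleftrightarrow> L \<noteq> [] \<and> steps_ok S [] L \<and> greedy_next S L (last L) = None"

lemma gn_None: "greedy_cands S L w = {} \<Longrightarrow> greedy_next S L w = None"
  by (simp add: greedy_next_def)

lemma gn_None_iff: "greedy_next S L w = None \<longleftrightarrow> greedy_cands S L w = {}"
  by (simp add: greedy_next_def Let_def)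

lemma gn_Some:
  assumes "(i, j) \<in> greedy_cands S L w"
    and "\<And>i' j'. (i', j') \<in> greedy_cands S L w \<Longrightarrow> i \<le> i'"
    and "\<And>j'. (i, j') \<in> greedy_cands S L w \<Longrightarrow> j \<le> j'"
  shows "greedy_next S L w = Some (hom_trans w i j)"
proof -
  have ne: "greedy_cands S L w \<noteq> {}" using assms(1) by auto
  have i0: "(LEAST i. \<exists>j. (i, j) \<in> greedy_cands S L w) = i"
    by (rule Least_equality) (use assms in auto)
  have j0: "(LEAST j. (i, j) \<in> greedy_cands S L w) = j"
    by (rule Least_equality) (use assms in auto)
  show ?thesis using ne i0 j0 by (simp add: greedy_next_def Let_def)
qed

lemma gn_SomeD:
  assumes "greedy_next S L w = Some v"
  shows "\<exists>i j. (i, j) \<in> greedy_cands S L w \<and> v = hom_trans w i j"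
proof -
  let ?C = "greedy_cands S L w"
  have ne: "?C \<noteq> {}" using assms by (auto simp: greedy_next_def)
  then obtain a b where ab: "(a, b) \<in> ?C" by auto
  define i0 where "i0 = (LEAST i. \<exists>j. (i, j) \<in> ?C)"
  have "\<exists>j. (i0, j) \<in> ?C" unfolding i0_def by (rule LeastI[of _ a]) (use ab in auto)
  then obtain c where c: "(i0, c) \<in> ?C" by auto
  define j0 where "j0 = (LEAST j. (i0, j) \<in> ?C)"
  have j0C: "(i0, j0) \<in> ?C" unfolding j0_def by (rule LeastI[of _ c]) (use c in auto)
  have "v = hom_trans w i0 j0" using assms ne by (simp add: greedy_next_def Let_def i0_def j0_def)
  then show ?thesis using j0C by blast
qed

lemma gn_Some_mem:
  assumes "greedy_next S L w = Some v"
  shows "v \<in> S" "v \<notin> set L"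
  using gn_SomeD[OF assms] by (auto simp: greedy_cands_def)

lemma greedy_aux_run:
  assumes "finite S" "L \<noteq> []" "steps_ok S [] L" "distinct L" "set L \<subseteq> S"
    "card S < f + length L"
  shows "run S (greedy_aux S f L) \<and> take (length L) (greedy_aux S f L) = L
         \<and> distinct (greedy_aux S f L) \<and> set (greedy_aux S f L) \<subseteq> S"
  using assms
proof (induction f arbitrary: L)
  case 0
  have "card (set L) \<le> card S" using 0 by (simp add: card_mono)
  then have "length L \<le> card S" using 0 by (simp add: distinct_card)
  then show ?case using 0 by simp
next
  case (Suc f)
  show ?case
  proof (cases "greedy_next S L (last L)")
    case None
    then show ?thesis using Suc.prems by (simp add: run_def)
  next
    case (Some v)
    have v: "v \<in> S" "v \<notin> set L" using gn_Some_mem[OF Some] by auto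
    have st: "steps_ok S [] (L @ [v])"
      unfolding steps_ok_def
    proof (intro allI impI)
      fix t assume t: "Suc t < length (L @ [v])"
      show "greedy_next S ([] @ take (Suc t) (L @ [v])) ((L @ [v]) ! t) = Some ((L @ [v]) ! Suc t)"
      proof (cases "Suc t < length L")
        case True
        then show ?thesis using Suc.prems(3) by (simp add: steps_ok_def nth_append)
      next
        case False
        then have "Suc t = length L" using t by simp
        moreover have "L ! t = last L" using `Suc t = length L` Suc.prems(2)
          by (metis diff_Suc_1 last_conv_nth)
        ultimately show ?thesis using Some by (simp add: nth_append)
      qed
    qed
    have IH: "run S (greedy_aux S f (L @ [v])) \<and> take (length (L @ [v])) (greedy_aux S f (L @ [v])) = L @ [v]
         \<and> distinct (greedy_aux S f (L @ [v])) \<and> set (greedy_aux S f (L @ [v])) \<subseteq> S"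
    proof (rule Suc.IH)
      show "finite S" using Suc.prems by simp
      show "L @ [v] \<noteq> []" by simp
      show "steps_ok S [] (L @ [v])" by (rule st)
      show "distinct (L @ [v])" using Suc.prems(4) v by simp
      show "set (L @ [v]) \<subseteq> S" using Suc.prems(5) v by simp
      show "card S < f + length (L @ [v])" using Suc.prems(6) by simp
    qed
    have "take (length L) (greedy_aux S f (L @ [v])) = L"
    proof -
      have "take (length L) (greedy_aux S f (L @ [v])) = take (length L) (take (length (L @ [v])) (greedy_aux S f (L @ [v])))"
        by simp
      also have "\<dots> = L" using IH by simp
      finally show ?thesis .
    qed
    then show ?thesis using IH Some by simp
  qed
qed

lemma finite_Fib: "finite (Fib_words n k)"
proof -
  have "Fib_words n k \<subseteq> {xs. set xs \<subseteq> UNIV \<and> length xs = n}" by (auto simp: Fib_words_def)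
  moreover have "finite {xs :: bool list. set xs \<subseteq> UNIV \<and> length xs = n}"
    by (rule finite_lists_length_eq) simp
  ultimately show ?thesis by (rule finite_subset)
qed

lemma greedy_run:
  assumes "finite S" "a \<in> S"
  shows "run S (greedy S a)" "hd (greedy S a) = a" "set (greedy S a) \<subseteq> S"
proof -
  have "S \<noteq> {}" using assms(2) by blast
  then have "card S > 0" using assms(1) by (simp add: card_gt_0_iff)
  then have H: "run S (greedy_aux S (card S) [a]) \<and> take 1 (greedy_aux S (card S) [a]) = [a]
         \<and> distinct (greedy_aux S (card S) [a]) \<and> set (greedy_aux S (card S) [a]) \<subseteq> S"
    using greedy_aux_run[of S "[a]" "card S"] assms unfolding steps_ok_def by simp
  then show "run S (greedy S a)" "set (greedy S a) \<subseteq> S" by (auto simp: greedy_def)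
  from H have "greedy_aux S (card S) [a] \<noteq> []" by (auto simp: run_def)
  then obtain x xs where "greedy_aux S (card S) [a] = x # xs" by (cases "greedy_aux S (card S) [a]") auto
  then show "hd (greedy S a) = a" using H unfolding greedy_def by simp
qed

lemma run_unique:
  assumes "run S L1" "run S L2" "hd L1 = hd L2"
  shows "L1 = L2"
proof -
  have agree: "\<forall>t. t < length L1 \<and> t < length L2 \<longrightarrow> L1 ! t = L2 ! t"
  proof (intro allI)
    fix t show "t < length L1 \<and> t < length L2 \<longrightarrow> L1 ! t = L2 ! t"
    proof (induction t rule: less_induct)
      case (less t)
      show ?case
      proof (cases t)
        case 0 then show ?thesis using assms by (auto simp: run_def hd_conv_nth)
      next
        case (Suc t')
        show ?thesis
        proof
          assume tl: "t < length L1 \<and> t < length L2"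
          have eqtake: "take (Suc t') L1 = take (Suc t') L2"
            by (rule nth_equalityI) (use less Suc tl in auto)
          have "greedy_next S (take (Suc t') L1) (L1 ! t') = Some (L1 ! t)"
            using assms(1) tl Suc by (auto simp: run_def steps_ok_def)
          moreover have "greedy_next S (take (Suc t') L2) (L2 ! t') = Some (L2 ! t)"
            using assms(2) tl Suc by (auto simp: run_def steps_ok_def)
          moreover have "L1 ! t' = L2 ! t'" using less Suc tl by auto
          ultimately show "L1 ! t = L2 ! t" using eqtake by simp
        qed
      qed
    qed
  qed
  have len: "length L1 = length L2"
  proof (rule ccontr)
    assume ne: "length L1 \<noteq> length L2"
    have gen: "\<And>A B. run S A \<Longrightarrow> run S B \<Longrightarrow> length A < length B \<Longrightarrow>
       (\<forall>t. t < length A \<and> t < length B \<longrightarrow> A ! t = B ! t) \<Longrightarrow> False"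
    proof -
      fix A B assume rA: "run S A" and rB: "run S B" and lt: "length A < length B"
        and ag: "\<forall>t. t < length A \<and> t < length B \<longrightarrow> A ! t = B ! t"
      have An: "A \<noteq> []" using rA by (simp add: run_def)
      define t where "t = length A - 1"
      have tk: "Suc t = length A" using An by (simp add: t_def)
      have tkB: "take (Suc t) B = A" by (rule nth_equalityI) (use tk lt ag in auto)
      have "Suc t < length B" using lt tk by simp
      then have "greedy_next S (take (Suc t) B) (B ! t) = Some (B ! Suc t)"
        using rB unfolding run_def steps_ok_def by simp
      moreover have "B ! t = last A"
      proof -
        have "t < length A" "t < length B" using tk lt by auto
        then have "B ! t = A ! t" using ag by simp
        also have "\<dots> = last A" using tk An by (metis diff_Suc_1 last_conv_nth)
        finally show ?thesis .
      qed
      ultimately have "greedy_next S A (last A) \<noteq> None" using tkB by simp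
      then show False using rA by (simp add: run_def)
    qed
    from ne have "length L1 < length L2 \<or> length L2 < length L1" by arith
    then show False
      using gen[OF assms(1,2)] gen[OF assms(2,1)] agree by (metis)
  qed
  show ?thesis by (rule nth_equalityI) (use len agree in auto)
qed

lemma greedy_eq_run:
  assumes "finite S" "run S L" "hd L \<in> S"
  shows "greedy S (hd L) = L"
  using run_unique[OF greedy_run(1)[OF assms(1,3)] assms(2)] greedy_run(2)[OF assms(1,3)] by simp

lemma steps_append:
  assumes "steps_ok S Ov A" "steps_ok S (Ov @ A) B"
    "A \<noteq> [] \<Longrightarrow> B \<noteq> [] \<Longrightarrow> greedy_next S (Ov @ A) (last A) = Some (hd B)"
  shows "steps_ok S Ov (A @ B)"
  unfolding steps_ok_def
proof (intro allI impI)
  fix t assume t: "Suc t < length (A @ B)"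
  consider "Suc t < length A" | "Suc t = length A" | "length A \<le> t" by arith
  then show "greedy_next S (Ov @ take (Suc t) (A @ B)) ((A @ B) ! t) = Some ((A @ B) ! Suc t)"
  proof cases
    case 1 then show ?thesis using assms(1) by (simp add: steps_ok_def nth_append)
  next
    case 2
    then have An: "A \<noteq> []" and Bn: "B \<noteq> []" using t by auto
    have "A ! t = last A" using 2 An by (metis diff_Suc_1 last_conv_nth)
    moreover have "B ! 0 = hd B" using Bn by (simp add: hd_conv_nth)
    ultimately show ?thesis using 2 assms(3)[OF An Bn] by (simp add: nth_append)
  next
    case 3
    define t' where "t' = t - length A"
    have tt: "t = length A + t'" using 3 by (simp add: t'_def)
    have "Suc t' < length B" using t tt by simp
    then have "greedy_next S ((Ov @ A) @ take (Suc t') B) (B ! t') = Some (B ! Suc t')"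
      using assms(2) by (simp add: steps_ok_def)
    then show ?thesis using tt by (simp add: nth_append)
  qed
qed


definition topw :: "nat \<Rightarrow> nat \<Rightarrow> bool list" where
  "topw m j = map (\<lambda>i. m - 2*j \<le> i \<and> odd (m - i)) [0..<m]"

definition pk :: "nat \<Rightarrow> nat \<Rightarrow> bool list" where
  "pk m j = map (\<lambda>i. i < 2*j \<and> even i) [0..<m]"

definition Sh :: "nat \<Rightarrow> nat \<Rightarrow> nat \<Rightarrow> bool list" where
  "Sh m j d = topw (m - d) j @ replicate d False"

definition endC :: "nat \<Rightarrow> nat \<Rightarrow> bool list" where
  "endC n k = (if even k then pk n k else if n + 1 = 2*k then topw n k else topw (n-1) k @ [False])"

lemma length_topw[simp]: "length (topw m j) = m" by (simp add: topw_def)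
lemma length_pk[simp]: "length (pk m j) = m" by (simp add: pk_def)
lemma topw_nth: "i < m \<Longrightarrow> topw m j ! i = (m - 2*j \<le> i \<and> odd (m - i))" by (simp add: topw_def)
lemma pk_nth: "i < m \<Longrightarrow> pk m j ! i = (i < 2*j \<and> even i)" by (simp add: pk_def)

lemma topw_snoc: "topw (m+2) (Suc j) = topw m j @ [False, True]"
  by (rule nth_equalityI) (auto simp: topw_nth nth_append nth_Cons' less_Suc_eq)

lemma pk_snoc: "pk (Suc m) j = pk m j @ [m < 2*j \<and> even m]"
  by (simp add: pk_def)

lemma pk0: "pk m 0 = topw m 0"
  by (rule nth_equalityI) (auto simp: topw_nth pk_nth)

lemma topw0: "topw m 0 = replicate m False"
  by (rule nth_equalityI) (auto simp: topw_nth)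

lemma Sh0: "Sh m j 0 = topw m j" by (simp add: Sh_def)

lemma Sh_snoc: "Sh (Suc m) j (Suc d) = Sh m j d @ [False]"
  by (simp add: Sh_def replicate_append_same[symmetric])

lemma last_topw: "1 \<le> j \<Longrightarrow> 1 \<le> m \<Longrightarrow> last (topw m j) = True"
proof -
  assume a: "1 \<le> j" "1 \<le> m"
  then have "topw m j \<noteq> []" using length_topw[of m j] by (metis list.size(3) not_one_le_zero)
  then have "last (topw m j) = topw m j ! (m - 1)" by (simp add: last_conv_nth)
  also have "\<dots> = True" using a by (simp add: topw_nth)
  finally show ?thesis .
qed

lemma weight_append[simp]: "weight (xs @ ys) = weight xs + weight ys"
  by (simp add: weight_def)

lemma weight_Cons: "weight (x # xs) = (if x then Suc (weight xs) else weight xs)"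
  by (simp add: weight_def)

lemma count_update:
  "i < length xs \<Longrightarrow> count_list (xs[i := x]) y =
     count_list xs y - (if xs ! i = y then 1 else 0) + (if x = y then 1 else 0)"
proof (induction xs arbitrary: i)
  case Nil then show ?case by simp
next
  case (Cons a xs)
  show ?case
  proof (cases i)
    case 0 then show ?thesis by auto
  next
    case (Suc i')
    then have "i' < length xs" using Cons by simp
    then have IH: "count_list (xs[i' := x]) y =
     count_list xs y - (if xs ! i' = y then 1 else 0) + (if x = y then 1 else 0)" using Cons.IH by simp
    have pos: "xs ! i' = y \<Longrightarrow> count_list xs y \<ge> 1"
      using `i' < length xs` by (metis One_nat_def Suc_leI count_list_0_iff gr0I nth_mem)
    show ?thesis using Suc IH pos by auto
  qed
qed

lemma weight_hom_trans:
  assumes "i < length w" "j < length w" "w ! i" "\<not> w ! j"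
  shows "weight (hom_trans w i j) = weight w"
proof -
  have ij: "i \<noteq> j" using assms by auto
  have c1: "count_list (w[i := False]) True = count_list w True - 1"
    using count_update[of i w False True] assms by simp
  have "count_list ((w[i := False])[j := True]) True = count_list (w[i := False]) True + 1"
    using count_update[of j "w[i := False]" True True] assms ij by simp
  moreover have "count_list w True \<ge> 1"
    using assms by (metis One_nat_def Suc_leI count_list_0_iff gr0I nth_mem)
  ultimately show ?thesis using c1 by (simp add: hom_trans_def weight_def)
qed

lemma hom_trans_nth:
  "k < length w \<Longrightarrow> i \<noteq> j \<Longrightarrow> hom_trans w i j ! k = (if k = j then True else if k = i then False else w ! k)"
  by (simp add: hom_trans_def nth_list_update)

lemma length_hom_trans[simp]: "length (hom_trans w i j) = length w"
  by (simp add: hom_trans_def)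

lemma hom_trans_in:
  assumes w: "w \<in> Fib_words n k" and ok: "hom_trans_ok w i j"
    and r: "Suc j < n \<Longrightarrow> Suc j = i \<or> \<not> w ! Suc j"
    and l: "0 < j \<Longrightarrow> j - 1 = i \<or> \<not> w ! (j - 1)"
  shows "hom_trans w i j \<in> Fib_words n k"
proof -
  have len: "length w = n" using w by (simp add: Fib_words_def)
  have ij: "i < n" "j < n" "w ! i" "\<not> w ! j" "i \<noteq> j" using ok len by (auto simp: hom_trans_ok_def)
  have wt: "weight (hom_trans w i j) = k" using weight_hom_trans[of i w j] ij len w
    by (simp add: Fib_words_def)
  have adj: "\<forall>p. Suc p < n \<longrightarrow> \<not> (hom_trans w i j ! p \<and> hom_trans w i j ! Suc p)"
  proof (intro allI impI)
    fix p assume p: "Suc p < n"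
    have w0: "\<not> (w ! p \<and> w ! Suc p)" using w p by (simp add: Fib_words_def)
    show "\<not> (hom_trans w i j ! p \<and> hom_trans w i j ! Suc p)"
      using p ij len r l w0 by (auto simp: hom_trans_nth)
  qed
  show ?thesis using wt adj len by (simp add: Fib_words_def)
qed

lemma fib_snoc0: "length x = m \<Longrightarrow> (x @ [False] \<in> Fib_words (Suc m) k \<longleftrightarrow> x \<in> Fib_words m k)"
proof
  assume l: "length x = m" and h: "x @ [False] \<in> Fib_words (Suc m) k"
  show "x \<in> Fib_words m k" unfolding Fib_words_def
  proof (intro CollectI conjI allI impI)
    show "length x = m" by (rule l)
    show "weight x = k" using h by (simp add: Fib_words_def weight_def)
    fix p assume p: "Suc p < m"
    then have "\<not> ((x @ [False]) ! p \<and> (x @ [False]) ! Suc p)" using h by (simp add: Fib_words_def)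
    then show "\<not> (x ! p \<and> x ! Suc p)" using p l by (simp add: nth_append)
  qed
next
  assume l: "length x = m" and x: "x \<in> Fib_words m k"
  show "x @ [False] \<in> Fib_words (Suc m) k" unfolding Fib_words_def
  proof (intro CollectI conjI allI impI)
    show "length (x @ [False]) = Suc m" using l by simp
    show "weight (x @ [False]) = k" using x by (simp add: Fib_words_def weight_def)
    fix p assume "Suc p < Suc m"
    then consider "Suc p < m" | "Suc p = m" by arith
    then show "\<not> ((x @ [False]) ! p \<and> (x @ [False]) ! Suc p)"
    proof cases
      case 1 then show ?thesis using x l by (simp add: Fib_words_def nth_append)
    next
      case 2 then show ?thesis using l by (simp add: nth_append)
    qed
  qed
qed

lemma fib_snoc01: "length x = m \<Longrightarrow> (x @ [False, True] \<in> Fib_words (m+2) (Suc k) \<longleftrightarrow> x \<in> Fib_words m k)"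
proof
  assume l: "length x = m" and h: "x @ [False, True] \<in> Fib_words (m+2) (Suc k)"
  show "x \<in> Fib_words m k" unfolding Fib_words_def
  proof (intro CollectI conjI allI impI)
    show "length x = m" by (rule l)
    show "weight x = k" using h by (simp add: Fib_words_def weight_def)
    fix p assume p: "Suc p < m"
    then have "\<not> ((x @ [False, True]) ! p \<and> (x @ [False, True]) ! Suc p)" using h by (simp add: Fib_words_def)
    then show "\<not> (x ! p \<and> x ! Suc p)" using p l by (simp add: nth_append)
  qed
next
  assume l: "length x = m" and x: "x \<in> Fib_words m k"
  show "x @ [False, True] \<in> Fib_words (m+2) (Suc k)"
    unfolding Fib_words_def
  proof (intro CollectI conjI allI impI)
    show "length (x @ [False, True]) = m + 2" using l by simp
    show "weight (x @ [False, True]) = Suc k" using x by (simp add: Fib_words_def weight_def)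
    fix p assume "Suc p < m + 2"
    then consider "Suc p < m" | "Suc p = m" | "p = m" by arith
    then show "\<not> ((x @ [False, True]) ! p \<and> (x @ [False, True]) ! Suc p)"
    proof cases
      case 1 then show ?thesis using x l by (simp add: Fib_words_def nth_append)
    next
      case 2 then show ?thesis using l by (simp add: nth_append)
    next
      case 3 then show ?thesis using l by (simp add: nth_append)
    qed
  qed
qed


lemma fib_len: "w \<in> Fib_words n k \<Longrightarrow> length w = n" by (simp add: Fib_words_def)

lemma fib_last_F:
  assumes "w \<in> Fib_words n k" "n \<ge> 1" "\<not> last w"
  shows "w = butlast w @ [False] \<and> butlast w \<in> Fib_words (n-1) k"
proof -
  have ne: "w \<noteq> []" using assms fib_len by fastforce
  have e: "w = butlast w @ [False]" using ne assms(3) by (metis append_butlast_last_id)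
  have eq: "Suc (n-1) = n" using assms by simp
  have "butlast w @ [False] \<in> Fib_words (Suc (n-1)) k" unfolding eq using e[symmetric] assms(1) by simp
  then have "butlast w \<in> Fib_words (n-1) k" using fib_snoc0[of "butlast w" "n-1"] assms fib_len by simp
  then show ?thesis by (rule conjI[OF e])
qed

lemma fib_last_T:
  assumes "w \<in> Fib_words n k" "n \<ge> 2" "last w"
  shows "w = take (n-2) w @ [False, True] \<and> take (n-2) w \<in> Fib_words (n-2) (k-1) \<and> k \<ge> 1"
proof -
  have len: "length w = n" using assms fib_len by blast
  have ne: "w \<noteq> []" using assms len by auto
  have l: "w ! (n-1)" using assms ne len by (simp add: last_conv_nth)
  have "\<not> (w ! (n-2) \<and> w ! Suc (n-2))" using assms len by (simp add: Fib_words_def)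
  moreover have "Suc (n-2) = n-1" using assms by simp
  ultimately have l2: "\<not> w ! (n-2)" using l by simp
  have e: "w = take (n-2) w @ [False, True]"
  proof (rule nth_equalityI)
    show "length w = length (take (n-2) w @ [False, True])" using len assms by simp
    fix i assume "i < length w"
    then consider "i < n-2" | "i = n-2" | "i = n-1" using len by arith
    then show "w ! i = (take (n-2) w @ [False, True]) ! i"
      by cases (use len assms l l2 in \<open>auto simp: nth_append\<close>)
  qed
  have "weight w = weight (take (n-2) w @ [False, True])" using e by (rule arg_cong)
  then have wt: "weight w \<ge> 1" by (simp add: weight_def)
  then have k1: "k \<ge> 1" using assms by (simp add: Fib_words_def)
  have eq: "(n-2)+2 = n" "Suc (k-1) = k" using assms k1 by auto
  have "take (n-2) w @ [False, True] \<in> Fib_words ((n-2)+2) (Suc (k-1))"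
    unfolding eq using e[symmetric] assms(1) by simp
  then have "take (n-2) w \<in> Fib_words (n-2) (k-1)" using fib_snoc01[of "take (n-2) w" "n-2"] len by simp
  then show ?thesis using e k1 by blast
qed

lemma fib_bound: "w \<in> Fib_words n k \<Longrightarrow> 2*k \<le> n + 1"
proof (induction n arbitrary: w k rule: less_induct)
  case (less n)
  show ?case
  proof (cases "n \<le> 1")
    case True
    have "weight w \<le> length w" by (simp add: weight_def count_le_length)
    then show ?thesis using less.prems True by (auto simp: Fib_words_def)
  next
    case False
    show ?thesis
    proof (cases "last w")
      case True
      from fib_last_T[OF less.prems _ True] False
      have "take (n-2) w \<in> Fib_words (n-2) (k-1)" "k \<ge> 1" by auto
      then show ?thesis using less.IH[of "n-2"] False by fastforce
    next
      case F: False
      from fib_last_F[OF less.prems _ F] False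
      have "butlast w \<in> Fib_words (n-1) k" by auto
      then show ?thesis using less.IH[of "n-1"] False by fastforce
    qed
  qed
qed

lemma fib_k0: "w \<in> Fib_words n 0 \<Longrightarrow> w = topw n 0"
  by (auto simp: Fib_words_def weight_def count_list_0_iff topw0 intro!: nth_equalityI)
    (metis (full_types) nth_mem)

lemma fib_single: "n + 1 = 2*k \<Longrightarrow> w \<in> Fib_words n k \<Longrightarrow> w = topw n k"
proof (induction n arbitrary: w k rule: less_induct)
  case (less n)
  show ?case
  proof (cases "n \<le> 1")
    case True
    have nk: "n = 1" "k = 1" using less.prems(1) True by arith+
    have len: "length w = 1" using less.prems(2) nk by (simp add: Fib_words_def)
    have wt: "count_list w True = 1" using less.prems(2) nk by (simp add: Fib_words_def weight_def)
    obtain a where wa: "w = [a]" using len by (cases w) auto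
    have "w = [True]" using wt wa by (cases a) auto
    moreover have "topw 1 1 = [True]" by (simp add: topw_def)
    ultimately show ?thesis using nk by simp
  next
    case False
    show ?thesis
    proof (cases "last w")
      case True
      from fib_last_T[OF less.prems(2) _ True] False
      have e: "w = take (n-2) w @ [False, True]" and f: "take (n-2) w \<in> Fib_words (n-2) (k-1)" and k: "k \<ge> 1" by auto
      have "(n-2) + 1 = 2*(k-1)" using less.prems False k by auto
      moreover have "n - 2 < n" using False by simp
      ultimately have "take (n-2) w = topw (n-2) (k-1)" using less.IH f by blast
      then have "w = topw (n-2) (k-1) @ [False, True]" using e by simp
      also have "\<dots> = topw ((n-2)+2) (Suc (k-1))" by (rule topw_snoc[symmetric])
      also have "(n-2)+2 = n" using False by simp
      also have "Suc (k-1) = k" using k by simp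
      finally show ?thesis .
    next
      case F: False
      from fib_last_F[OF less.prems(2) _ F] False
      have "butlast w \<in> Fib_words (n-1) k" by auto
      then have "2*k \<le> (n - 1) + 1" by (rule fib_bound)
      with less.prems(1) have False by arith
      then show ?thesis ..
    qed
  qed
qed

lemma run_single:
  assumes "S = {a}" shows "greedy S a = [a]"
proof -
  have "greedy_cands S [a] a = {}" unfolding greedy_cands_def assms by auto
  then have r: "run S [a]" by (simp add: run_def steps_ok_def gn_None)
  have f: "finite S" "hd [a] \<in> S" using assms by auto
  have "greedy S (hd [a]) = [a]" by (rule greedy_eq_run[OF f(1) r f(2)])
  then show ?thesis by simp
qed

lemma fib_k0_set: "Fib_words n 0 = {topw n 0}"
proof -
  have "topw n 0 \<in> Fib_words n 0"
    by (simp add: Fib_words_def topw0 weight_def count_list_0_iff)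
  then show ?thesis using fib_k0 by blast
qed

lemma fib_single_set: "n + 1 = 2*k \<Longrightarrow> w \<in> Fib_words n k \<Longrightarrow> Fib_words n k = {topw n k}"
  using fib_single by blast


lemma gn_SomeD2:
  assumes "greedy_next S L w = Some v"
  shows "\<exists>i j. (i, j) \<in> greedy_cands S L w \<and> v = hom_trans w i j
     \<and> (\<forall>i' j'. (i', j') \<in> greedy_cands S L w \<longrightarrow> i \<le> i')
     \<and> (\<forall>j'. (i, j') \<in> greedy_cands S L w \<longrightarrow> j \<le> j')"
proof -
  let ?C = "greedy_cands S L w"
  have ne: "?C \<noteq> {}" using assms by (auto simp: greedy_next_def)
  then obtain a b where ab: "(a, b) \<in> ?C" by auto
  define i0 where "i0 = (LEAST i. \<exists>j. (i, j) \<in> ?C)"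
  have "\<exists>j. (i0, j) \<in> ?C" unfolding i0_def by (rule LeastI[of _ a]) (use ab in auto)
  then obtain c where c: "(i0, c) \<in> ?C" by auto
  have imin: "\<forall>i' j'. (i', j') \<in> ?C \<longrightarrow> i0 \<le> i'"
    unfolding i0_def by (auto intro: Least_le)
  define j0 where "j0 = (LEAST j. (i0, j) \<in> ?C)"
  have j0C: "(i0, j0) \<in> ?C" unfolding j0_def by (rule LeastI[of _ c]) (use c in auto)
  have jmin: "\<forall>j'. (i0, j') \<in> ?C \<longrightarrow> j0 \<le> j'"
    unfolding j0_def by (auto intro: Least_le)
  have "v = hom_trans w i0 j0" using assms ne by (simp add: greedy_next_def Let_def i0_def j0_def)
  then show ?thesis using j0C imin jmin by blast
qed

lemma hom_trans_ok_lift: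
  assumes "length w = m" "i < m" "j < m"
  shows "hom_trans_ok (w @ s) i j \<longleftrightarrow> hom_trans_ok w i j"
  using assms by (auto simp: hom_trans_ok_def nth_append)

lemma hom_trans_lift:
  assumes "length w = m" "i < m" "j < m"
  shows "hom_trans (w @ s) i j = hom_trans w i j @ s"
  using assms by (simp add: hom_trans_def list_update_append)

lemma lift_cands:
  assumes memb: "\<forall>x. length x = m \<longrightarrow> (x @ s \<in> S \<longleftrightarrow> x \<in> S')"
    and Oc: "\<forall>u \<in> set Ov. \<forall>x. u \<noteq> x @ s"
    and len: "length w = m" and ij: "i < m" "j < m"
  shows "(i, j) \<in> greedy_cands S (Ov @ map (\<lambda>u. u @ s) M) (w @ s) \<longleftrightarrow> (i, j) \<in> greedy_cands S' M w"
proof -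
  have h: "hom_trans (w @ s) i j = hom_trans w i j @ s" using hom_trans_lift[OF len ij] .
  have lh: "length (hom_trans w i j) = m" using len by simp
  have m1: "hom_trans w i j @ s \<in> S \<longleftrightarrow> hom_trans w i j \<in> S'" using memb lh by blast
  have m2: "hom_trans w i j @ s \<in> set (Ov @ map (\<lambda>u. u @ s) M) \<longleftrightarrow> hom_trans w i j \<in> set M"
    using Oc by auto
  show ?thesis unfolding greedy_cands_def
    using hom_trans_ok_lift[OF len ij, of s] h m1 m2 by auto
qed

lemma lift_next:
  assumes memb: "\<forall>x. length x = m \<longrightarrow> (x @ s \<in> S \<longleftrightarrow> x \<in> S')"
    and Oc: "\<forall>u \<in> set Ov. \<forall>x. u \<noteq> x @ s"
    and len: "length w = m"
    and prio: "\<And>i j. (i, j) \<in> greedy_cands S (Ov @ map (\<lambda>u. u @ s) M) (w @ s) \<Longrightarrow> \<not> (i < m \<and> j < m)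
        \<Longrightarrow> (\<forall>i'<m. w ! i' \<longrightarrow> i' < i \<or> (i' = i \<and> m \<le> j))"
    and gn: "greedy_next S' M w = Some v"
  shows "greedy_next S (Ov @ map (\<lambda>u. u @ s) M) (w @ s) = Some (v @ s)"
proof -
  let ?C = "greedy_cands S (Ov @ map (\<lambda>u. u @ s) M) (w @ s)"
  let ?C' = "greedy_cands S' M w"
  obtain i0 j0 where c0: "(i0, j0) \<in> ?C'" and v: "v = hom_trans w i0 j0"
    and imin: "\<forall>i' j'. (i', j') \<in> ?C' \<longrightarrow> i0 \<le> i'"
    and jmin: "\<forall>j'. (i0, j') \<in> ?C' \<longrightarrow> j0 \<le> j'"
    using gn_SomeD2[OF gn] by blast
  have ok: "hom_trans_ok w i0 j0" using c0 by (simp add: greedy_cands_def)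
  then have ij0: "i0 < m" "j0 < m" "w ! i0" using len by (auto simp: hom_trans_ok_def)
  have inC: "(i0, j0) \<in> ?C" using lift_cands[OF memb Oc len ij0(1,2)] c0 by simp
  have imin2: "i0 \<le> i'" if "(i', j') \<in> ?C" for i' j'
  proof (cases "i' < m \<and> j' < m")
    case True
    then have "(i', j') \<in> ?C'" using lift_cands[OF memb Oc len] that by blast
    then show ?thesis using imin by blast
  next
    case False
    then show ?thesis using prio[OF that False] ij0 by force
  qed
  have jmin2: "j0 \<le> j'" if "(i0, j') \<in> ?C" for j'
  proof (cases "j' < m")
    case True
    then have "(i0, j') \<in> ?C'" using lift_cands[OF memb Oc len ij0(1)] that by blast
    then show ?thesis using jmin by blast
  next
    case False
    then show ?thesis using ij0 by simp
  qed
  have "greedy_next S (Ov @ map (\<lambda>u. u @ s) M) (w @ s) = Some (hom_trans (w @ s) i0 j0)"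
    by (rule gn_Some[OF inC]) (use imin2 jmin2 in auto)
  then show ?thesis using v hom_trans_lift[OF len ij0(1,2)] by simp
qed

lemma lift_stuck:
  assumes memb: "\<forall>x. length x = m \<longrightarrow> (x @ s \<in> S \<longleftrightarrow> x \<in> S')"
    and Oc: "\<forall>u \<in> set Ov. \<forall>x. u \<noteq> x @ s"
    and len: "length w = m"
    and gn: "greedy_next S' M w = None"
    and c: "(i, j) \<in> greedy_cands S (Ov @ map (\<lambda>u. u @ s) M) (w @ s)"
  shows "\<not> (i < m \<and> j < m)"
proof
  assume "i < m \<and> j < m"
  then have "(i, j) \<in> greedy_cands S' M w" using lift_cands[OF memb Oc len] c by blast
  then show False using gn by (simp add: gn_None_iff)
qed

lemma memb0: "\<forall>x. length x = m \<longrightarrow> (x @ [False] \<in> Fib_words (Suc m) k \<longleftrightarrow> x \<in> Fib_words m k)"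
  using fib_snoc0 by blast

lemma memb01: "\<forall>x. length x = m \<longrightarrow> (x @ [False, True] \<in> Fib_words (m+2) (Suc k) \<longleftrightarrow> x \<in> Fib_words m k)"
  using fib_snoc01 by blast

lemma E0:
  assumes len: "length w = m" and ok: "hom_trans_ok (w @ [False]) i j" and nl: "\<not> (i < m \<and> j < m)"
  shows "j = m \<and> i < m \<and> w ! i \<and> (\<forall>p. i < p \<and> p < m \<longrightarrow> \<not> w ! p)"
proof -
  have a: "i < Suc m" "j < Suc m" "(w @ [False]) ! i" "\<not> (w @ [False]) ! j"
    "\<forall>p. min i j < p \<and> p < max i j \<longrightarrow> \<not> (w @ [False]) ! p"
    using ok len by (auto simp: hom_trans_ok_def)
  have im: "i < m" using a(1,3) len by (cases "i = m") (auto simp: nth_append)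
  then have jm: "j = m" using nl a(2) by simp
  have wi: "w ! i" using a(3) im len by (simp add: nth_append)
  have "\<forall>p. i < p \<and> p < m \<longrightarrow> \<not> w ! p"
  proof (intro allI impI)
    fix p assume p: "i < p \<and> p < m"
    then have "\<not> (w @ [False]) ! p" using a(5) im jm by auto
    then show "\<not> w ! p" using p len by (simp add: nth_append)
  qed
  then show ?thesis using im jm wi by simp
qed

lemma prio0:
  assumes len: "length w = m" and c: "(i, j) \<in> greedy_cands S L (w @ [False])" and nl: "\<not> (i < m \<and> j < m)"
  shows "\<forall>i'<m. w ! i' \<longrightarrow> i' < i \<or> (i' = i \<and> m \<le> j)"
proof -
  have ok: "hom_trans_ok (w @ [False]) i j" using c by (simp add: greedy_cands_def)
  from E0[OF len ok nl] show ?thesis by (metis linorder_neqE_nat order_refl)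
qed

lemma E01:
  assumes len: "length w = m" and c: "(i, j) \<in> greedy_cands (Fib_words (m+2) k) L (w @ [False, True])"
    and nl: "\<not> (i < m \<and> j < m)"
  shows "i = Suc m"
proof -
  have ok: "hom_trans_ok (w @ [False, True]) i j" and inS: "hom_trans (w @ [False, True]) i j \<in> Fib_words (m+2) k"
    using c by (auto simp: greedy_cands_def)
  have a: "i < m + 2" "j < m + 2" "(w @ [False, True]) ! i" "\<not> (w @ [False, True]) ! j" "i \<noteq> j"
    using ok len by (auto simp: hom_trans_ok_def)
  have "i \<noteq> m" using a(3) len by (auto simp: nth_append)
  moreover have "j \<noteq> Suc m" using a(4) len by (auto simp: nth_append)
  moreover have "\<not> (i < m)"
  proof
    assume im: "i < m"
    then have jm: "j = m" using nl a(2) \<open>j \<noteq> Suc m\<close> by arith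
    let ?t = "hom_trans (w @ [False, True]) i j"
    have "?t ! m" using jm im len by (simp add: hom_trans_nth)
    moreover have "?t ! Suc m" using jm im len by (simp add: hom_trans_nth nth_append)
    moreover have "\<not> (?t ! m \<and> ?t ! Suc m)" using inS by (simp add: Fib_words_def)
    ultimately show False by simp
  qed
  ultimately show ?thesis using a(1) by arith
qed

lemma prio01:
  assumes len: "length w = m" and c: "(i, j) \<in> greedy_cands (Fib_words (m+2) k) L (w @ [False, True])"
    and nl: "\<not> (i < m \<and> j < m)"
  shows "\<forall>i'<m. w ! i' \<longrightarrow> i' < i \<or> (i' = i \<and> m \<le> j)"
  using E01[OF len c nl] by simp

lemma sp_single: "suffix_partitioned [x]"
  by (auto simp: suffix_partitioned_def)

lemma sp_map:
  assumes "suffix_partitioned M"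
  shows "suffix_partitioned (map (\<lambda>u. u @ s) M)"
  unfolding suffix_partitioned_def
proof (intro allI impI)
  fix x p q r
  assume h: "p \<le> q \<and> q \<le> r \<and> r < length (map (\<lambda>u. u @ s) M) \<and>
           suffix x (map (\<lambda>u. u @ s) M ! p) \<and> suffix x (map (\<lambda>u. u @ s) M ! r)"
  then have hp: "suffix x (M ! p @ s)" and hr: "suffix x (M ! r @ s)" and pr: "p \<le> q" "q \<le> r" "r < length M"
    by auto
  show "suffix x (map (\<lambda>u. u @ s) M ! q)"
  proof (cases "suffix x s")
    case True
    then have "suffix x (M ! q @ s)" by (rule suffix_appendI)
    then show ?thesis using pr by simp
  next
    case False
    then obtain x' where x': "x = x' @ s" "suffix x' (M ! p)" using hp unfolding suffix_append by blast
    have "suffix (x' @ s) (M ! r @ s)" using hr x'(1) by simp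
    then have "suffix x' (M ! r)" by (simp only: same_suffix_suffix)
    then have "suffix x' (M ! q)" using assms x'(2) pr unfolding suffix_partitioned_def by blast
    then have "suffix (x' @ s) (M ! q @ s)" by (simp only: same_suffix_suffix)
    then show ?thesis using x'(1) pr by simp
  qed
qed

lemma last_suffix: "suffix x u \<Longrightarrow> x \<noteq> [] \<Longrightarrow> last x = last u"
  unfolding suffix_def by auto

lemma sp_append:
  assumes A: "suffix_partitioned A" and B: "suffix_partitioned B"
    and d: "\<forall>u\<in>set A. \<forall>v\<in>set B. last u \<noteq> last v"
  shows "suffix_partitioned (A @ B)"
  unfolding suffix_partitioned_def
proof (intro allI impI)
  fix x p q r
  assume h: "p \<le> q \<and> q \<le> r \<and> r < length (A @ B) \<and> suffix x ((A @ B) ! p) \<and> suffix x ((A @ B) ! r)"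
  then have pq: "p \<le> q" and qr: "q \<le> r" and rl: "r < length A + length B"
    and sp: "suffix x ((A @ B) ! p)" and sr: "suffix x ((A @ B) ! r)" by auto
  show "suffix x ((A @ B) ! q)"
  proof (cases "x = []")
    case True then show ?thesis by simp
  next
    case xne: False
    consider "r < length A" | "length A \<le> p" | "p < length A \<and> length A \<le> r" by arith
    then show ?thesis
    proof cases
      case 1
      have "suffix x (A ! p)" using sp 1 pq qr by (simp add: nth_append)
      moreover have "suffix x (A ! r)" using sr 1 by (simp add: nth_append)
      ultimately have "suffix x (A ! q)" using A pq qr 1 unfolding suffix_partitioned_def by blast
      then show ?thesis using 1 qr by (simp add: nth_append)
    next
      case 2
      have a1: "suffix x (B ! (p - length A))" using sp 2 by (simp add: nth_append)
      have a2: "suffix x (B ! (r - length A))" using sr 2 pq qr by (simp add: nth_append)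
      have a3: "p - length A \<le> q - length A" "q - length A \<le> r - length A" "r - length A < length B"
        using pq qr rl 2 by arith+
      have "suffix x (B ! (q - length A))" using B a1 a2 a3 unfolding suffix_partitioned_def by blast
      then show ?thesis using 2 pq by (simp add: nth_append)
    next
      case 3
      have u: "A ! p \<in> set A" "suffix x (A ! p)" using sp 3 by (auto simp: nth_append)
      have v: "B ! (r - length A) \<in> set B" "suffix x (B ! (r - length A))" using sr 3 rl by (auto simp: nth_append)
      have "last (A ! p) = last (B ! (r - length A))"
        using last_suffix[OF u(2) xne] last_suffix[OF v(2) xne] by simp
      then show ?thesis using d u(1) v(1) by blast
    qed
  qed
qed


abbreviation G :: "nat \<Rightarrow> nat \<Rightarrow> bool list \<Rightarrow> bool list list" where
  "G n k a \<equiv> greedy (Fib_words n k) a"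

definition Good :: "nat \<Rightarrow> nat \<Rightarrow> bool list \<Rightarrow> bool" where
  "Good n k a \<longleftrightarrow> suffix_partitioned (G n k a) \<and>
     (a \<noteq> topw n k \<longrightarrow> last (G n k a) = topw n k) \<and>
     ((k \<le> 1 \<or> a = pk n k \<or> (\<exists>d. a = Sh n k d)) \<longrightarrow> set (G n k a) = Fib_words n k) \<and>
     (a = topw n k \<longrightarrow> last (G n k a) = endC n k)"

definition GoodN :: "nat \<Rightarrow> bool" where
  "GoodN n \<longleftrightarrow> (\<forall>k a. a \<in> Fib_words n k \<longrightarrow> Good n k a)"

lemma steps0:
  assumes st: "steps_ok (Fib_words m k) [] M" and sub: "set M \<subseteq> Fib_words m k"
    and Oc: "\<forall>u\<in>set Ov. \<forall>x. u \<noteq> x @ [False]"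
  shows "steps_ok (Fib_words (Suc m) k) Ov (map (\<lambda>u. u @ [False]) M)"
  unfolding steps_ok_def
proof (intro allI impI)
  fix t assume t: "Suc t < length (map (\<lambda>u. u @ [False]) M)"
  then have t': "Suc t < length M" by simp
  have g: "greedy_next (Fib_words m k) (take (Suc t) M) (M ! t) = Some (M ! Suc t)"
    using st t' by (simp add: steps_ok_def)
  have "M ! t \<in> set M" using t' by simp
  then have len: "length (M ! t) = m" using sub fib_len by blast
  have "greedy_next (Fib_words (Suc m) k) (Ov @ map (\<lambda>u. u @ [False]) (take (Suc t) M)) (M ! t @ [False])
        = Some (M ! Suc t @ [False])"
    by (rule lift_next[OF memb0 Oc len _ g]) (rule prio0[OF len], assumption+)
  then show "greedy_next (Fib_words (Suc m) k) (Ov @ take (Suc t) (map (\<lambda>u. u @ [False]) M))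
          (map (\<lambda>u. u @ [False]) M ! t) = Some (map (\<lambda>u. u @ [False]) M ! Suc t)"
    using t' by (simp add: take_map)
qed

lemma steps01:
  assumes st: "steps_ok (Fib_words m k) [] M" and sub: "set M \<subseteq> Fib_words m k"
    and Oc: "\<forall>u\<in>set Ov. \<forall>x. u \<noteq> x @ [False, True]"
  shows "steps_ok (Fib_words (m+2) (Suc k)) Ov (map (\<lambda>u. u @ [False, True]) M)"
  unfolding steps_ok_def
proof (intro allI impI)
  fix t assume t: "Suc t < length (map (\<lambda>u. u @ [False, True]) M)"
  then have t': "Suc t < length M" by simp
  have g: "greedy_next (Fib_words m k) (take (Suc t) M) (M ! t) = Some (M ! Suc t)"
    using st t' by (simp add: steps_ok_def)
  have "M ! t \<in> set M" using t' by simp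
  then have len: "length (M ! t) = m" using sub fib_len by blast
  have "greedy_next (Fib_words (m+2) (Suc k)) (Ov @ map (\<lambda>u. u @ [False, True]) (take (Suc t) M)) (M ! t @ [False, True])
        = Some (M ! Suc t @ [False, True])"
    by (rule lift_next[OF memb01 Oc len _ g]) (rule prio01[OF len], assumption+)
  then show "greedy_next (Fib_words (m+2) (Suc k)) (Ov @ take (Suc t) (map (\<lambda>u. u @ [False, True]) M))
          (map (\<lambda>u. u @ [False, True]) M ! t) = Some (map (\<lambda>u. u @ [False, True]) M ! Suc t)"
    using t' by (simp add: take_map)
qed

lemma stuck0:
  assumes gn: "greedy_next (Fib_words m k) M w = None" and len: "length w = m"
    and Oc: "\<forall>u\<in>set Ov. \<forall>x. u \<noteq> x @ [False]"
    and c: "(i, j) \<in> greedy_cands (Fib_words (Suc m) k) (Ov @ map (\<lambda>u. u @ [False]) M) (w @ [False])"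
  shows "j = m \<and> i < m \<and> w ! i \<and> (\<forall>p. i < p \<and> p < m \<longrightarrow> \<not> w ! p)"
proof -
  have nl: "\<not> (i < m \<and> j < m)" by (rule lift_stuck[OF memb0 Oc len gn c])
  have ok: "hom_trans_ok (w @ [False]) i j" using c by (simp add: greedy_cands_def)
  show ?thesis by (rule E0[OF len ok nl])
qed

lemma stuck01:
  assumes gn: "greedy_next (Fib_words m k) M w = None" and len: "length w = m"
    and Oc: "\<forall>u\<in>set Ov. \<forall>x. u \<noteq> x @ [False, True]"
    and c: "(i, j) \<in> greedy_cands (Fib_words (m+2) (Suc k)) (Ov @ map (\<lambda>u. u @ [False, True]) M) (w @ [False, True])"
  shows "i = Suc m"
proof -
  have nl: "\<not> (i < m \<and> j < m)" by (rule lift_stuck[OF memb01 Oc len gn c])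
  show ?thesis by (rule E01[OF len c nl])
qed

lemma run_stuck: "run S M \<Longrightarrow> greedy_next S M (last M) = None"
  by (simp add: run_def)

lemma Oc0: "\<forall>u\<in>set (map (\<lambda>u. u @ [False, True]) M). \<forall>x. u \<noteq> x @ [False]"
  by auto

lemma Oc01: "\<forall>u\<in>set (map (\<lambda>u. u @ [False]) M). \<forall>x. u \<noteq> x @ [False, True]"
  by auto

lemma Oc_nil: "\<forall>u\<in>set []. P u" by simp


lemma pk_eq_topw: "n + 1 = 2*k \<Longrightarrow> pk n k = topw n k"
proof (rule nth_equalityI)
  assume a: "n + 1 = 2*k"
  show "length (pk n k) = length (topw n k)" by simp
  fix i assume "i < length (pk n k)"
  then have i: "i < n" by simp
  have "(i < 2*k \<and> even i) = (n - 2*k \<le> i \<and> odd (n - i))" using a i by presburger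
  then show "pk n k ! i = topw n k ! i" using i by (simp add: pk_nth topw_nth)
qed

lemma case_k0:
  assumes "a \<in> Fib_words n 0" shows "Good n 0 a"
proof -
  have a: "a = topw n 0" using fib_k0[OF assms] .
  have S: "Fib_words n 0 = {a}" using fib_k0_set a by simp
  have g: "G n 0 a = [a]" using run_single[OF S] .
  have e: "endC n 0 = topw n 0" by (simp add: endC_def pk0)
  show ?thesis unfolding Good_def g using S a e by (simp add: sp_single)
qed

lemma case_single:
  assumes "a \<in> Fib_words n k" "n + 1 = 2*k"
  shows "Good n k a"
proof -
  have a: "a = topw n k" using fib_single assms by blast
  have S: "Fib_words n k = {a}" using fib_single_set[OF assms(2,1)] a by simp
  have g: "G n k a = [a]" using run_single[OF S] .
  have e: "endC n k = topw n k" using pk_eq_topw[OF assms(2)] assms(2) by (simp add: endC_def)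
  show ?thesis unfolding Good_def g using S a e by (simp add: sp_single)
qed


lemma Sh_last: "last (Sh m j (Suc d)) = False"
proof -
  have "Sh m j (Suc d) = (topw (m - Suc d) j @ replicate d False) @ [False]"
    by (simp add: Sh_def replicate_append_same[symmetric])
  then show ?thesis by simp
qed

lemma topw_last_idx: "1 \<le> j \<Longrightarrow> 1 \<le> m \<Longrightarrow> topw m j ! (m - 1)"
  by (simp add: topw_nth)

lemma lastL_end:
  assumes "M \<noteq> []" shows "last (map f M) = f (last M)"
  using assms by (simp add: last_map)

lemma case_T_i:
  assumes a: "a \<in> Fib_words n k" and k: "k \<ge> 1" and n: "2*k \<le> n" and la: "last a"
    and ne: "take (n-2) a \<noteq> topw (n-2) (k-1)" and IH: "GoodN (n-2)"
  shows "Good n k a"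
proof -
  define m where "m = n - 2"
  define a' where "a' = take (n-2) a"
  have nm: "n = m + 2" using n k by (simp add: m_def)
  have kk: "k = Suc (k-1)" using k by simp
  have dec: "a = a' @ [False, True]" "a' \<in> Fib_words m (k-1)"
    using fib_last_T[OF a _ la] n k by (auto simp: a'_def m_def)
  have k2: "k \<ge> 2"
  proof (rule ccontr)
    assume "\<not> k \<ge> 2"
    then have "k - 1 = 0" using k by simp
    then have "a' = topw m (k-1)" using fib_k0 dec(2) by simp
    then show False using ne by (simp add: a'_def m_def)
  qed
  have m2: "m \<ge> 2" using n k2 by (simp add: m_def)
  define M where "M = G m (k-1) a'"
  have gd: "Good m (k-1) a'" using IH dec(2) by (simp add: GoodN_def m_def)
  have a'ne: "a' \<noteq> topw m (k-1)" using ne by (simp add: a'_def m_def)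
  have lastM: "last M = topw m (k-1)" using gd a'ne by (simp add: Good_def M_def)
  have spM: "suffix_partitioned M" using gd by (simp add: Good_def M_def)
  have rM: "run (Fib_words m (k-1)) M" "hd M = a'" "set M \<subseteq> Fib_words m (k-1)"
    using greedy_run[OF finite_Fib dec(2)] by (simp_all add: M_def)
  have Mne: "M \<noteq> []" using rM by (simp add: run_def)
  define L where "L = map (\<lambda>u. u @ [False, True]) M"
  have S: "Fib_words n k = Fib_words (m+2) (Suc (k-1))" using nm kk by simp
  have st: "steps_ok (Fib_words n k) [] L"
    unfolding S L_def by (rule steps01[OF _ rM(3) Oc_nil]) (use rM in \<open>simp add: run_def\<close>)
  define w where "w = topw m (k-1)"
  have lastL: "last L = w @ [False, True]" using Mne lastM by (simp add: L_def last_map w_def)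
  have lw: "length w = m" by (simp add: w_def)
  have wlast: "w ! (m-1)" using k2 m2 by (simp add: w_def topw_nth)
  have stuck: "greedy_cands (Fib_words n k) L (w @ [False, True]) = {}"
  proof (rule ccontr)
    assume "greedy_cands (Fib_words n k) L (w @ [False, True]) \<noteq> {}"
    then obtain i j where c: "(i, j) \<in> greedy_cands (Fib_words n k) L (w @ [False, True])" by auto
    have c': "(i, j) \<in> greedy_cands (Fib_words (m+2) (Suc (k-1))) ([] @ map (\<lambda>u. u @ [False, True]) M) (w @ [False, True])"
      using c S by (simp add: L_def)
    have gnM: "greedy_next (Fib_words m (k-1)) M w = None" using rM lastM by (simp add: run_def w_def)
    have i: "i = Suc m" by (rule stuck01[OF gnM lw Oc_nil c'])
    have ok: "hom_trans_ok (w @ [False, True]) i j" and inS: "hom_trans (w @ [False, True]) i j \<in> Fib_words n k"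
      using c by (auto simp: greedy_cands_def)
    have jb: "j < m + 2" "\<not> (w @ [False, True]) ! j" "i \<noteq> j"
      and btw: "\<forall>p. min i j < p \<and> p < max i j \<longrightarrow> \<not> (w @ [False, True]) ! p"
      using ok lw by (auto simp: hom_trans_ok_def)
    have wl2: "(w @ [False, True]) ! (m - 1)" using wlast lw m2 by (simp add: nth_append)
    have jm: "j = m"
    proof -
      have "j \<noteq> Suc m" using jb(3) i by simp
      moreover have "\<not> j < m - 1" using btw i wl2 m2 by (metis max.commute max_def min_def not_less_eq_eq  less_imp_le_nat order.strict_trans diff_less zero_less_numeral Suc_lessD lessI le_less_trans less_imp_diff_less)
      moreover have "j \<noteq> m - 1" using jb(2) wl2 by auto
      ultimately show ?thesis using jb(1) by arith
    qed
    let ?t = "hom_trans (w @ [False, True]) i j"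
    have t1: "?t ! m" using jm i lw by (simp add: hom_trans_nth)
    have t2: "?t ! (m - 1)" using jm i lw wl2 m2 by (simp add: hom_trans_nth)
    have adj: "\<forall>p. Suc p < n \<longrightarrow> \<not> (?t ! p \<and> ?t ! Suc p)" using inS by (simp add: Fib_words_def)
    have sm: "Suc (m - 1) = m" using m2 by simp
    have "Suc (m - 1) < n" using m2 nm by simp
    then have "\<not> (?t ! (m - 1) \<and> ?t ! Suc (m - 1))" using adj by blast
    then show False using t1 t2 sm by simp
  qed
  have rL: "run (Fib_words n k) L"
    unfolding run_def using Mne st stuck lastL by (simp add: L_def gn_None)
  have hdL: "hd L = a" using Mne rM(2) dec(1) by (simp add: L_def hd_map)
  have aS: "hd L \<in> Fib_words n k" using hdL a by simp
  have g: "G n k a = L" using greedy_eq_run[OF finite_Fib rL aS] hdL by simp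
  have topeq: "topw n k = topw m (k-1) @ [False, True]" using nm kk topw_snoc[of m "k-1"] by simp
  have ane: "a \<noteq> topw n k" using dec(1) topeq a'ne by simp
  have sp: "suffix_partitioned L" unfolding L_def by (rule sp_map[OF spM])
  have notW: "\<not> (k \<le> 1 \<or> a = pk n k \<or> (\<exists>d. a = Sh n k d))"
  proof -
    have "a \<noteq> pk n k"
    proof
      assume "a = pk n k"
      then have "last (pk n k)" using la by simp
      moreover have "pk n k = pk (n-1) k @ [n - 1 < 2*k \<and> even (n-1)]" using pk_snoc[of "n-1" k] nm by simp
      ultimately have "n - 1 < 2*k \<and> even (n-1)" by simp
      with n k2 show False by presburger
    qed
    moreover have "\<not> (\<exists>d. a = Sh n k d)"
    proof
      assume "\<exists>d. a = Sh n k d"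
      then obtain d where d: "a = Sh n k d" by blast
      show False
      proof (cases d)
        case 0 then show ?thesis using d ane by (simp add: Sh0)
      next
        case (Suc d') then show ?thesis using d la Sh_last[of n k d'] by simp
      qed
    qed
    ultimately show ?thesis using k2 by simp
  qed
  show ?thesis unfolding Good_def g using sp ane lastL topeq notW by (simp add: w_def)
qed


lemma nth01: "length x = m \<Longrightarrow> p < m + 2 \<Longrightarrow> (x @ [False, True]) ! p = (if p < m then x ! p else p = Suc m)"
  by (auto simp: nth_append nth_Cons' less_Suc_eq)

lemma nth0: "length x = m \<Longrightarrow> p < Suc m \<Longrightarrow> (x @ [False]) ! p = (p < m \<and> x ! p)"
  by (auto simp: nth_append)

lemma last_nth_n: "length u = n \<Longrightarrow> n \<ge> 1 \<Longrightarrow> last u = u ! (n - 1)"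
  by (cases u rule: rev_cases) (auto simp: nth_append)

lemma trans_even:
  assumes k: "k \<ge> 1" "odd k" and n: "2*k \<le> n"
    and wS: "pk (n-2) (k-1) @ [False, True] \<in> Fib_words n k"
    and L1: "\<forall>u \<in> set L1. last u"
    and onlyi: "\<And>i j. (i, j) \<in> greedy_cands (Fib_words n k) L1 (pk (n-2) (k-1) @ [False, True]) \<Longrightarrow> i = n-1"
  shows "greedy_next (Fib_words n k) L1 (pk (n-2) (k-1) @ [False, True]) = Some (pk (n-1) k @ [False])"
proof -
  define w where "w = pk (n-2) (k-1) @ [False, True]"
  have lw: "length w = n" using n k by (simp add: w_def)
  have wn: "w ! p = ((p < 2*k-2 \<and> even p) \<or> p = n-1)" if "p < n" for p
    using that n k by (auto simp: w_def nth01 pk_nth)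
  define i0 where "i0 = n - 1"
  define j0 where "j0 = 2*k - 2"
  have ij: "i0 < n" "j0 < n" "i0 \<noteq> j0" using n k by (auto simp: i0_def j0_def)
  have ok: "hom_trans_ok w i0 j0"
    unfolding hom_trans_ok_def using ij lw wn by (auto simp: i0_def j0_def)
  define t where "t = hom_trans w i0 j0"
  have lt: "length t = n" using lw by (simp add: t_def)
  have tn: "t ! p = (p = j0 \<or> (p \<noteq> i0 \<and> w ! p))" if "p < n" for p
    using that lw ij by (auto simp: t_def hom_trans_nth)
  have tS: "t \<in> Fib_words n k" unfolding t_def w_def
  proof (rule hom_trans_in[OF wS])
    show "hom_trans_ok (pk (n - 2) (k - 1) @ [False, True]) i0 j0" using ok by (simp add: w_def)
    show "Suc j0 < n \<Longrightarrow> Suc j0 = i0 \<or> \<not> (pk (n - 2) (k - 1) @ [False, True]) ! Suc j0"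
      using wn[of "Suc j0"] by (auto simp: w_def j0_def i0_def)
    show "0 < j0 \<Longrightarrow> j0 - 1 = i0 \<or> \<not> (pk (n - 2) (k - 1) @ [False, True]) ! (j0 - 1)"
      using wn[of "j0 - 1"] ij by (auto simp: w_def j0_def i0_def)
  qed
  have tlast: "\<not> last t" using last_nth_n[OF lt] tn[of "n-1"] n k by (simp add: i0_def j0_def)
  have tnot: "t \<notin> set L1" using L1 tlast by auto
  have cand: "(i0, j0) \<in> greedy_cands (Fib_words n k) L1 w"
    using ok tS tnot by (simp add: greedy_cands_def t_def)
  have imin: "i0 \<le> i'" if "(i', j') \<in> greedy_cands (Fib_words n k) L1 w" for i' j'
    using onlyi[of i' j'] that by (simp add: w_def i0_def)
  have jmin: "j0 \<le> j'" if c: "(i0, j') \<in> greedy_cands (Fib_words n k) L1 w" for j'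
  proof (rule ccontr)
    assume "\<not> j0 \<le> j'"
    then have jl: "j' < 2*k - 2" by (simp add: j0_def)
    have ok': "hom_trans_ok w i0 j'" and inS': "hom_trans w i0 j' \<in> Fib_words n k"
      using c by (auto simp: greedy_cands_def)
    have nj: "\<not> w ! j'" using ok' by (simp add: hom_trans_ok_def)
    have btw: "\<forall>p. j' < p \<and> p < i0 \<longrightarrow> \<not> w ! p" using ok' jl ij by (auto simp: hom_trans_ok_def i0_def j0_def)
    have oj: "odd j'" using nj wn[of j'] jl n by auto
    have "\<not> w ! Suc j'" using btw jl n k by (auto simp: i0_def)
    then have "Suc j' = 2*k - 2" using wn[of "Suc j'"] jl oj n by auto
    then have j'e: "j' = 2*k - 3" and k2: "k \<ge> 2" by auto
    let ?t = "hom_trans w i0 j'"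
    have adj: "\<forall>p. Suc p < n \<longrightarrow> \<not> (?t ! p \<and> ?t ! Suc p)" using inS' by (simp add: Fib_words_def)
    have "?t ! (2*k - 4)" using wn[of "2*k-4"] j'e k2 n lw by (auto simp: hom_trans_nth i0_def)
    moreover have "?t ! (2*k - 3)" using j'e k2 n lw by (auto simp: hom_trans_nth i0_def)
    moreover have "Suc (2*k - 4) = 2*k - 3" "Suc (2*k - 4) < n" using k2 n by auto
    ultimately show False using adj by metis
  qed
  have "greedy_next (Fib_words n k) L1 w = Some t"
    unfolding t_def by (rule gn_Some[OF cand]) (use imin jmin in auto)
  moreover have "t = pk (n-1) k @ [False]"
  proof (rule nth_equalityI)
    show "length t = length (pk (n-1) k @ [False])" using lt n k by simp
    fix p assume "p < length t"
    then have p: "p < n" using lt by simp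
    show "t ! p = (pk (n-1) k @ [False]) ! p"
      using tn[OF p] wn[OF p] p n k by (auto simp: nth0 pk_nth i0_def j0_def nth_append)
  qed
  ultimately show ?thesis by (simp add: w_def)
qed

lemma trans_odd:
  assumes k: "k \<ge> 2" "even k" and n: "2*k \<le> n"
    and wS: "(topw (n-3) (k-1) @ [False]) @ [False, True] \<in> Fib_words n k"
    and L1: "\<forall>u \<in> set L1. last u"
    and onlyi: "\<And>i j. (i, j) \<in> greedy_cands (Fib_words n k) L1 ((topw (n-3) (k-1) @ [False]) @ [False, True]) \<Longrightarrow> i = n-1"
  shows "greedy_next (Fib_words n k) L1 ((topw (n-3) (k-1) @ [False]) @ [False, True]) = Some (topw (n-1) k @ [False])"
proof -
  define w where "w = (topw (n-3) (k-1) @ [False]) @ [False, True]"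
  have lw: "length w = n" using n k by (simp add: w_def)
  have wn: "w ! p = ((n - 3 - 2*(k-1) \<le> p \<and> p < n - 3 \<and> odd (n - 3 - p)) \<or> p = n-1)" if "p < n" for p
  proof -
    have l1: "length (topw (n-3) (k-1) @ [False]) = n - 2" using n k by simp
    have "w ! p = (if p < n - 2 then (topw (n-3) (k-1) @ [False]) ! p else p = Suc (n-2))"
      unfolding w_def by (rule nth01[OF l1]) (use that n k in simp)
    then show ?thesis using that n k by (auto simp: nth0 topw_nth nth_append)
  qed
  define i0 where "i0 = n - 1"
  define j0 where "j0 = n - 2"
  have ij: "i0 < n" "j0 < n" "i0 \<noteq> j0" using n k by (auto simp: i0_def j0_def)
  have ok: "hom_trans_ok w i0 j0"
    unfolding hom_trans_ok_def using ij lw wn by (auto simp: i0_def j0_def)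
  define t where "t = hom_trans w i0 j0"
  have lt: "length t = n" using lw by (simp add: t_def)
  have tn: "t ! p = (p = j0 \<or> (p \<noteq> i0 \<and> w ! p))" if "p < n" for p
    using that lw ij by (auto simp: t_def hom_trans_nth)
  have tS: "t \<in> Fib_words n k" unfolding t_def w_def
  proof (rule hom_trans_in[OF wS])
    show "hom_trans_ok ((topw (n-3) (k-1) @ [False]) @ [False, True]) i0 j0" using ok by (simp add: w_def)
    show "Suc j0 < n \<Longrightarrow> Suc j0 = i0 \<or> \<not> ((topw (n-3) (k-1) @ [False]) @ [False, True]) ! Suc j0"
      by (auto simp: j0_def i0_def)
    show "0 < j0 \<Longrightarrow> j0 - 1 = i0 \<or> \<not> ((topw (n-3) (k-1) @ [False]) @ [False, True]) ! (j0 - 1)"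
      using wn[of "j0 - 1"] ij n k by (auto simp: w_def j0_def i0_def)
  qed
  have tlast: "\<not> last t" using last_nth_n[OF lt] tn[of "n-1"] n k by (simp add: i0_def j0_def)
  have tnot: "t \<notin> set L1" using L1 tlast by auto
  have cand: "(i0, j0) \<in> greedy_cands (Fib_words n k) L1 w"
    using ok tS tnot by (simp add: greedy_cands_def t_def)
  have imin: "i0 \<le> i'" if "(i', j') \<in> greedy_cands (Fib_words n k) L1 w" for i' j'
    using onlyi[of i' j'] that by (simp add: w_def i0_def)
  have w4: "w ! (n - 4)" using wn[of "n-4"] n k by auto
  have jmin: "j0 \<le> j'" if c: "(i0, j') \<in> greedy_cands (Fib_words n k) L1 w" for j'
  proof (rule ccontr)
    assume "\<not> j0 \<le> j'"
    then have jl: "j' < n - 2" by (simp add: j0_def)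
    have ok': "hom_trans_ok w i0 j'" and inS': "hom_trans w i0 j' \<in> Fib_words n k"
      using c by (auto simp: greedy_cands_def)
    have nj: "\<not> w ! j'" using ok' by (simp add: hom_trans_ok_def)
    have btw: "\<forall>p. j' < p \<and> p < i0 \<longrightarrow> \<not> w ! p" using ok' jl ij by (auto simp: hom_trans_ok_def i0_def j0_def)
    have "\<not> j' < n - 4" using btw w4 n k by (auto simp: i0_def)
    moreover have "j' \<noteq> n - 4" using nj w4 by auto
    ultimately have j'e: "j' = n - 3" using jl by arith
    let ?t = "hom_trans w i0 j'"
    have adj: "\<forall>p. Suc p < n \<longrightarrow> \<not> (?t ! p \<and> ?t ! Suc p)" using inS' by (simp add: Fib_words_def)
    have "?t ! (n - 4)" using w4 j'e k n lw by (auto simp: hom_trans_nth i0_def)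
    moreover have "?t ! (n - 3)" using j'e k n lw by (auto simp: hom_trans_nth i0_def)
    moreover have "Suc (n - 4) = n - 3" "Suc (n - 4) < n" using k n by auto
    ultimately show False using adj by metis
  qed
  have "greedy_next (Fib_words n k) L1 w = Some t"
    unfolding t_def by (rule gn_Some[OF cand]) (use imin jmin in auto)
  moreover have "t = topw (n-1) k @ [False]"
  proof (rule nth_equalityI)
    show "length t = length (topw (n-1) k @ [False])" using lt n k by simp
    fix p assume "p < length t"
    then have p: "p < n" using lt by simp
    have r: "(topw (n-1) k @ [False]) ! p = (p < n - 1 \<and> n - 1 - 2*k \<le> p \<and> odd (n - 1 - p))"
      using p n k by (auto simp: nth_append topw_nth)
    consider "p < n - 3" | "p = n - 3" | "p = n - 2" | "p = n - 1" using p by arith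
    then show "t ! p = (topw (n-1) k @ [False]) ! p"
    proof cases
      case 1
      have e1: "n - 3 - 2*(k-1) = n - 1 - 2*k" using n k by arith
      have "n - 1 - p = Suc (Suc (n - 3 - p))" using 1 by arith
      then have e2: "odd (n - 3 - p) = odd (n - 1 - p)" by simp
      have ne: "p \<noteq> n - 2" "p \<noteq> n - 1" "p < n - 1" using 1 by arith+
      show ?thesis using tn[OF p] wn[OF p] r 1 e1 e2 ne by (simp add: i0_def j0_def)
    next
      case 2 then show ?thesis using tn[OF p] wn[OF p] r n k by (simp add: i0_def j0_def)
    next
      case 3
      have "n - 2 < n - 1 \<and> n - 1 - 2*k \<le> n - 2" using n k by arith
      then show ?thesis using tn[OF p] r n k 3 by (simp add: i0_def j0_def)
    next
      case 4 then show ?thesis using tn[OF p] r n k by (simp add: i0_def j0_def)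
    qed
  qed
  ultimately show ?thesis by (simp add: w_def)
qed


lemma fib_split:
  assumes "n \<ge> 2" "k \<ge> 1"
  shows "Fib_words n k = (\<lambda>u. u @ [False, True]) ` Fib_words (n-2) (k-1) \<union> (\<lambda>u. u @ [False]) ` Fib_words (n-1) k"
proof
  show "Fib_words n k \<subseteq> (\<lambda>u. u @ [False, True]) ` Fib_words (n-2) (k-1) \<union> (\<lambda>u. u @ [False]) ` Fib_words (n-1) k"
  proof
    fix u assume u: "u \<in> Fib_words n k"
    show "u \<in> (\<lambda>u. u @ [False, True]) ` Fib_words (n-2) (k-1) \<union> (\<lambda>u. u @ [False]) ` Fib_words (n-1) k"
    proof (cases "last u")
      case True
      from fib_last_T[OF u assms(1) True] show ?thesis by blast
    next
      case False
      have "1 \<le> n" using assms by simp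
      from fib_last_F[OF u this False] show ?thesis by blast
    qed
  qed
next
  have e1: "n - 2 + 2 = n" "Suc (k - 1) = k" "Suc (n - 1) = n" using assms by auto
  show "(\<lambda>u. u @ [False, True]) ` Fib_words (n-2) (k-1) \<union> (\<lambda>u. u @ [False]) ` Fib_words (n-1) k \<subseteq> Fib_words n k"
  proof
    fix v assume "v \<in> (\<lambda>u. u @ [False, True]) ` Fib_words (n-2) (k-1) \<union> (\<lambda>u. u @ [False]) ` Fib_words (n-1) k"
    then consider x where "x \<in> Fib_words (n-2) (k-1)" "v = x @ [False, True]"
      | x where "x \<in> Fib_words (n-1) k" "v = x @ [False]" by blast
    then show "v \<in> Fib_words n k"
    proof cases
      case 1
      then have "x @ [False, True] \<in> Fib_words (n - 2 + 2) (Suc (k - 1))"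
        using fib_snoc01[of x "n-2" "k-1"] fib_len by blast
      then show ?thesis using 1 e1 by simp
    next
      case 2
      then have "x @ [False] \<in> Fib_words (Suc (n - 1)) k"
        using fib_snoc0[of x "n-1" k] fib_len by blast
      then show ?thesis using 2 e1 by simp
    qed
  qed
qed

lemma pk_ne_topw:
  assumes "2*j \<le> m" "j \<ge> 1" shows "pk m j \<noteq> topw m j"
proof
  assume e: "pk m j = topw m j"
  have m: "0 < m" using assms by simp
  have "pk m j ! 0" using m assms by (simp add: pk_nth)
  then have "topw m j ! 0" using e by simp
  then have "m - 2*j \<le> 0" "odd (m - 0)" using m by (simp_all add: topw_nth)
  then have "m = 2*j" "odd m" using assms by auto
  then show False by simp
qed

lemma case_T_ii:
  assumes aS: "topw n k \<in> Fib_words n k" and k: "k \<ge> 1" and n: "2*k \<le> n"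
    and IH2: "GoodN (n-2)" and IH1: "GoodN (n-1)"
  shows "Good n k (topw n k)"
proof -
  define m where "m = n - 2"
  have nm: "n = m + 2" using n k by (simp add: m_def)
  have kk: "k = Suc (k-1)" using k by simp
  have S: "Fib_words n k = Fib_words (m+2) (Suc (k-1))" using nm kk by simp
  have S0: "Fib_words n k = Fib_words (Suc (n-1)) k" using nm by simp
  define a' where "a' = topw m (k-1)"
  have topeq: "topw n k = a' @ [False, True]" using nm kk topw_snoc[of m "k-1"] by (simp add: a'_def)
  have a'S: "a' \<in> Fib_words m (k-1)" using aS topeq S fib_snoc01[of a' m "k-1"] by (simp add: a'_def)
  define M1 where "M1 = G m (k-1) a'"
  have gd1: "Good m (k-1) a'" using IH2 a'S by (simp add: GoodN_def m_def)
  have setM1: "set M1 = Fib_words m (k-1)"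
  proof -
    have "a' = Sh m (k-1) 0" by (simp add: Sh0 a'_def)
    then show ?thesis using gd1 unfolding Good_def M1_def by blast
  qed
  have lastM1: "last M1 = endC m (k-1)" using gd1 by (simp add: Good_def M1_def a'_def)
  have spM1: "suffix_partitioned M1" using gd1 by (simp add: Good_def M1_def)
  have rM1: "run (Fib_words m (k-1)) M1" "hd M1 = a'" "set M1 \<subseteq> Fib_words m (k-1)"
    using greedy_run[OF finite_Fib a'S] by (simp_all add: M1_def)
  have M1ne: "M1 \<noteq> []" using rM1 by (simp add: run_def)
  define L1 where "L1 = map (\<lambda>u. u @ [False, True]) M1"
  define e1 where "e1 = endC m (k-1)"
  have e1S: "e1 \<in> Fib_words m (k-1)" using M1ne lastM1 rM1(3) unfolding e1_def by (metis last_in_set subsetD)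
  have le1: "length e1 = m" using e1S fib_len by blast
  have w1S: "e1 @ [False, True] \<in> Fib_words n k" using e1S S fib_snoc01[OF le1] by simp
  have L1last: "\<forall>u \<in> set L1. last u" by (simp add: L1_def)
  have lastL1: "last L1 = e1 @ [False, True]" using M1ne lastM1 by (simp add: L1_def last_map e1_def)
  have gnM1: "greedy_next (Fib_words m (k-1)) M1 e1 = None" using rM1 lastM1 by (simp add: run_def e1_def)
  have onlyi: "i = n - 1" if c: "(i, j) \<in> greedy_cands (Fib_words n k) L1 (e1 @ [False, True])" for i j
  proof -
    have c': "(i, j) \<in> greedy_cands (Fib_words (m+2) (Suc (k-1))) ([] @ map (\<lambda>u. u @ [False, True]) M1) (e1 @ [False, True])"
      using c S by (simp add: L1_def)
    show ?thesis using stuck01[OF gnM1 le1 Oc_nil c'] nm by simp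
  qed
  define \<beta> where "\<beta> = (if even (k-1) then pk (n-1) k else topw (n-1) k)"
  have tr: "greedy_next (Fib_words n k) L1 (e1 @ [False, True]) = Some (\<beta> @ [False])"
  proof (cases "even (k-1)")
    case True
    then have ko: "odd k" using k by presburger
    have e: "e1 = pk (n-2) (k-1)" using True by (simp add: e1_def endC_def m_def)
    have w1S': "pk (n-2) (k-1) @ [False, True] \<in> Fib_words n k" using w1S e by simp
    have oi: "\<And>i j. (i, j) \<in> greedy_cands (Fib_words n k) L1 (pk (n-2) (k-1) @ [False, True]) \<Longrightarrow> i = n-1"
      using onlyi e by simp
    have "greedy_next (Fib_words n k) L1 (pk (n-2) (k-1) @ [False, True]) = Some (pk (n-1) k @ [False])"
      by (rule trans_even[OF k ko n w1S' L1last oi])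
    then show ?thesis using e True by (simp add: \<beta>_def)
  next
    case False
    then have ke: "even k" and k2: "k \<ge> 2" using k by presburger+
    have "\<not> (m + 1 = 2*(k-1))" using n nm by arith
    then have e: "e1 = topw (n-3) (k-1) @ [False]" using False
      by (simp add: e1_def endC_def m_def numeral_3_eq_3)
    have w1S': "(topw (n-3) (k-1) @ [False]) @ [False, True] \<in> Fib_words n k" using w1S e by simp
    have oi: "\<And>i j. (i, j) \<in> greedy_cands (Fib_words n k) L1 ((topw (n-3) (k-1) @ [False]) @ [False, True]) \<Longrightarrow> i = n-1"
      using onlyi e by simp
    have "greedy_next (Fib_words n k) L1 ((topw (n-3) (k-1) @ [False]) @ [False, True]) = Some (topw (n-1) k @ [False])"
      by (rule trans_odd[OF k2 ke n w1S' L1last oi])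
    then show ?thesis using e False by (simp add: \<beta>_def)
  qed
  have \<beta>S: "\<beta> \<in> Fib_words (n-1) k"
  proof -
    have "\<beta> @ [False] \<in> Fib_words (Suc (n-1)) k" using gn_Some_mem(1)[OF tr] S0 by simp
    moreover have "length \<beta> = n - 1" by (simp add: \<beta>_def)
    ultimately show ?thesis using fib_snoc0 by blast
  qed
  define M2 where "M2 = G (n-1) k \<beta>"
  have gd2: "Good (n-1) k \<beta>" using IH1 \<beta>S by (simp add: GoodN_def)
  have setM2: "set M2 = Fib_words (n-1) k"
  proof -
    have "\<beta> = pk (n-1) k \<or> \<beta> = Sh (n-1) k 0" by (simp add: \<beta>_def Sh0)
    then show ?thesis using gd2 unfolding Good_def M2_def by blast
  qed
  have spM2: "suffix_partitioned M2" using gd2 by (simp add: Good_def M2_def)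
  have lastM2: "last M2 = (if even k then pk (n-1) k else topw (n-1) k)"
  proof (cases "even k")
    case True
    then have b: "\<beta> = topw (n-1) k" using k by (simp add: \<beta>_def)
    have "last M2 = endC (n-1) k" using gd2 b by (simp add: Good_def M2_def)
    then show ?thesis using True by (simp add: endC_def)
  next
    case False
    then have b: "\<beta> = pk (n-1) k" using k by (simp add: \<beta>_def)
    show ?thesis
    proof (cases "pk (n-1) k = topw (n-1) k")
      case True
      then have "2*k > n - 1" using pk_ne_topw[of k "n-1"] k by fastforce
      then have nn: "(n - 1) + 1 = 2*k" using n by arith
      have "last M2 = endC (n-1) k" using gd2 b True by (simp add: Good_def M2_def)
      then show ?thesis using False nn by (simp add: endC_def)
    next
      case ne: False
      have "last M2 = topw (n-1) k" using gd2 b ne by (simp add: Good_def M2_def)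
      then show ?thesis using False by simp
    qed
  qed
  have rM2: "run (Fib_words (n-1) k) M2" "hd M2 = \<beta>" "set M2 \<subseteq> Fib_words (n-1) k"
    using greedy_run[OF finite_Fib \<beta>S] by (simp_all add: M2_def)
  have M2ne: "M2 \<noteq> []" using rM2 by (simp add: run_def)
  define L2 where "L2 = map (\<lambda>u. u @ [False]) M2"
  define L where "L = L1 @ L2"
  have st1: "steps_ok (Fib_words n k) [] L1"
    unfolding S L1_def by (rule steps01[OF _ rM1(3) Oc_nil]) (use rM1 in \<open>simp add: run_def\<close>)
  have st2: "steps_ok (Fib_words n k) ([] @ L1) L2"
    unfolding S0 L2_def by (rule steps0[OF _ rM2(3)]) (use rM2 in \<open>auto simp: run_def L1_def\<close>)
  have hdL2: "hd L2 = \<beta> @ [False]" using M2ne rM2(2) by (simp add: L2_def hd_map)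
  have st: "steps_ok (Fib_words n k) [] L"
    unfolding L_def by (rule steps_append[OF st1 st2]) (use tr lastL1 hdL2 in simp)
  define w2 where "w2 = last M2"
  have lw2: "length w2 = n - 1" using M2ne rM2(3) fib_len unfolding w2_def by (metis last_in_set subsetD)
  have lastL: "last L = w2 @ [False]" using M2ne by (simp add: L_def L2_def last_map w2_def)
  have gnM2: "greedy_next (Fib_words (n-1) k) M2 w2 = None" using rM2 by (simp add: run_def w2_def)
  have stuck: "greedy_cands (Fib_words n k) L (w2 @ [False]) = {}"
  proof (rule ccontr)
    assume "greedy_cands (Fib_words n k) L (w2 @ [False]) \<noteq> {}"
    then obtain i j where c: "(i, j) \<in> greedy_cands (Fib_words n k) L (w2 @ [False])" by auto
    have c': "(i, j) \<in> greedy_cands (Fib_words (Suc (n-1)) k) (L1 @ map (\<lambda>u. u @ [False]) M2) (w2 @ [False])"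
      using c S0 by (simp add: L_def L2_def)
    have Oc: "\<forall>u\<in>set L1. \<forall>x. u \<noteq> x @ [False]" by (auto simp: L1_def)
    have jj: "j = n - 1" using stuck0[OF gnM2 lw2 Oc c'] by simp
    let ?t = "hom_trans (w2 @ [False]) i j"
    have ok: "hom_trans_ok (w2 @ [False]) i j" and tS: "?t \<in> Fib_words n k" and tn: "?t \<notin> set L"
      using c by (auto simp: greedy_cands_def)
    have ij: "i \<noteq> j" using ok by (auto simp: hom_trans_ok_def)
    have lt: "length ?t = n" using lw2 n k by simp
    have "?t ! (n-1)" using jj ij lw2 n k by (simp add: hom_trans_nth)
    then have tl: "last ?t" using last_nth_n[OF lt] n k by simp
    from fib_last_T[OF tS _ tl] n k
    have "?t = take (n-2) ?t @ [False, True]" "take (n-2) ?t \<in> Fib_words (n-2) (k-1)" by auto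
    then have "?t \<in> set L1" using setM1 by (auto simp: L1_def m_def)
    then show False using tn by (simp add: L_def)
  qed
  have Lne: "L \<noteq> []" using M1ne by (simp add: L_def L1_def)
  have rL: "run (Fib_words n k) L" unfolding run_def using Lne st stuck lastL by (simp add: gn_None)
  have hdL: "hd L = topw n k" using M1ne rM1(2) topeq by (simp add: L_def L1_def hd_map)
  have g: "G n k (topw n k) = L" using greedy_eq_run[OF finite_Fib rL] hdL aS by simp
  have sp: "suffix_partitioned L" unfolding L_def
  proof (rule sp_append)
    show "suffix_partitioned L1" unfolding L1_def by (rule sp_map[OF spM1])
    show "suffix_partitioned L2" unfolding L2_def by (rule sp_map[OF spM2])
    show "\<forall>u\<in>set L1. \<forall>v\<in>set L2. last u \<noteq> last v" by (auto simp: L1_def L2_def)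
  qed
  have setL: "set L = Fib_words n k"
    using fib_split[of n k] n k setM1 setM2 by (simp add: L_def L1_def L2_def m_def)
  have endL: "last L = endC n k"
  proof (cases "even k")
    case True
    have "pk n k = pk (n-1) k @ [n - 1 < 2*k \<and> even (n-1)]" using pk_snoc[of "n-1" k] nm by simp
    moreover have "\<not> (n - 1 < 2*k \<and> even (n-1))" using n k True by presburger
    ultimately show ?thesis using lastL lastM2 True by (simp add: w2_def endC_def)
  next
    case False
    have "n + 1 \<noteq> 2*k" using n by arith
    then show ?thesis using lastL lastM2 False by (simp add: w2_def endC_def)
  qed
  show ?thesis unfolding Good_def g using sp setL endL by simp
qed


lemma Sh_nth: "i < m \<Longrightarrow> d \<le> m \<Longrightarrow> Sh m j d ! i = (i < m - d \<and> topw (m - d) j ! i)"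
  by (auto simp: Sh_def nth_append)

lemma length_Sh: "d \<le> m \<Longrightarrow> length (Sh m j d) = m" by (simp add: Sh_def)

lemma id_a:
  assumes k: "k \<ge> 2" and n: "2*k \<le> n"
  shows "hom_trans (topw (n-1) k @ [False]) (n-2) (n-1) = Sh (n-2) (k-1) 1 @ [False, True]"
proof (rule nth_equalityI)
  show "length (hom_trans (topw (n-1) k @ [False]) (n-2) (n-1)) = length (Sh (n-2) (k-1) 1 @ [False, True])"
    using n k by (simp add: length_Sh)
  fix p assume "p < length (hom_trans (topw (n-1) k @ [False]) (n-2) (n-1))"
  then have p: "p < n" using n k by simp
  have l: "length (topw (n-1) k @ [False]) = n" using n k by simp
  have lhs: "hom_trans (topw (n-1) k @ [False]) (n-2) (n-1) ! p
      = (p = n - 1 \<or> (p \<noteq> n - 2 \<and> (topw (n-1) k @ [False]) ! p))"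
    using p l n k by (auto simp: hom_trans_nth)
  have rhs: "(Sh (n-2) (k-1) 1 @ [False, True]) ! p = (if p < n - 2 then Sh (n-2) (k-1) 1 ! p else p = Suc (n-2))"
    by (rule nth01) (use n k p in \<open>simp_all add: length_Sh\<close>)
  consider "p < n - 3" | "p = n - 3" | "p = n - 2" | "p = n - 1" using p by arith
  then show "hom_trans (topw (n-1) k @ [False]) (n-2) (n-1) ! p = (Sh (n-2) (k-1) 1 @ [False, True]) ! p"
  proof cases
    case 1
    have pl: "p < n - 1" using 1 by arith
    have a1: "(topw (n-1) k @ [False]) ! p = (n - 1 - 2*k \<le> p \<and> odd (n - 1 - p))"
      using pl by (simp add: nth_append topw_nth)
    have a2: "Sh (n-2) (k-1) 1 ! p = (n - 3 - 2*(k-1) \<le> p \<and> odd (n - 3 - p))"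
      using 1 n k by (simp add: Sh_nth topw_nth numeral_3_eq_3)
    have e1: "n - 3 - 2*(k-1) = n - 1 - 2*k" using n k by arith
    have "n - 1 - p = Suc (Suc (n - 3 - p))" using 1 by arith
    then have e2: "odd (n - 3 - p) = odd (n - 1 - p)" by simp
    have ne: "p \<noteq> n - 1" "p \<noteq> n - 2" "p < n - 2" using 1 by arith+
    show ?thesis using lhs rhs a1 a2 e1 e2 ne by simp
  next
    case 2
    have ne: "p \<noteq> n - 1" "p \<noteq> n - 2" "p < n - 2" "p < n - 1" using 2 n k by arith+
    have a1: "\<not> (topw (n-1) k @ [False]) ! p" using 2 ne by (simp add: nth_append topw_nth)
    have a2: "\<not> Sh (n-2) (k-1) 1 ! p" using 2 n k by (simp add: Sh_nth)
    show ?thesis using lhs rhs a1 a2 ne by simp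
  next
    case 3
    have ne: "p \<noteq> n - 1" "\<not> p < n - 2" "p \<noteq> Suc (n - 2)" using 3 n k by arith+
    show ?thesis using lhs rhs ne 3 by simp
  next
    case 4
    have ne: "p \<noteq> n - 2" "\<not> p < n - 2" "p = Suc (n - 2)" using 4 n k by arith+
    show ?thesis using lhs rhs ne 4 by simp
  qed
qed

lemma id_b:
  assumes k: "k \<ge> 2" and n: "2*k + 1 \<le> n"
  shows "hom_trans ((topw (n-2) k @ [False]) @ [False]) (n-3) (n-1) = Sh (n-2) (k-1) 2 @ [False, True]"
proof (rule nth_equalityI)
  show "length (hom_trans ((topw (n-2) k @ [False]) @ [False]) (n-3) (n-1)) = length (Sh (n-2) (k-1) 2 @ [False, True])"
    using n k by (simp add: length_Sh)
  fix p assume "p < length (hom_trans ((topw (n-2) k @ [False]) @ [False]) (n-3) (n-1))"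
  then have p: "p < n" using n k by simp
  have l: "length ((topw (n-2) k @ [False]) @ [False]) = n" using n k by simp
  have wn: "((topw (n-2) k @ [False]) @ [False]) ! p = (p < n - 2 \<and> n - 2 - 2*k \<le> p \<and> odd (n - 2 - p))"
  proof -
    have l1: "length (topw (n-2) k) = n - 2" by simp
    consider "p < n - 2" | "p = n - 2" | "p = n - 1" using p by arith
    then show ?thesis
    proof cases
      case 1 then show ?thesis by (simp add: nth_append topw_nth)
    next
      case 2 then show ?thesis using n by (simp add: nth_append)
    next
      case 3
      then have "p = Suc (n - 2)" using n k by arith
      then show ?thesis using n by (simp add: nth_append)
    qed
  qed
  have lhs: "hom_trans ((topw (n-2) k @ [False]) @ [False]) (n-3) (n-1) ! p
      = (p = n - 1 \<or> (p \<noteq> n - 3 \<and> ((topw (n-2) k @ [False]) @ [False]) ! p))"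
    using p l n k by (auto simp: hom_trans_nth)
  have rhs: "(Sh (n-2) (k-1) 2 @ [False, True]) ! p = (if p < n - 2 then Sh (n-2) (k-1) 2 ! p else p = Suc (n-2))"
    by (rule nth01) (use n k p in \<open>simp_all add: length_Sh\<close>)
  consider "p < n - 4" | "p = n - 4" | "p = n - 3" | "p = n - 2" | "p = n - 1" using p by arith
  then show "hom_trans ((topw (n-2) k @ [False]) @ [False]) (n-3) (n-1) ! p = (Sh (n-2) (k-1) 2 @ [False, True]) ! p"
  proof cases
    case 1
    have a2: "Sh (n-2) (k-1) 2 ! p = (n - 4 - 2*(k-1) \<le> p \<and> odd (n - 4 - p))"
      using 1 n k by (simp add: Sh_nth topw_nth)
    have e1: "n - 4 - 2*(k-1) = n - 2 - 2*k" using n k by arith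
    have "n - 2 - p = Suc (Suc (n - 4 - p))" using 1 by arith
    then have e2: "odd (n - 4 - p) = odd (n - 2 - p)" by simp
    have ne: "p \<noteq> n - 1" "p \<noteq> n - 3" "p < n - 2" using 1 by arith+
    show ?thesis using lhs rhs wn a2 e1 e2 ne by simp
  next
    case 2
    have ne: "p \<noteq> n - 1" "p \<noteq> n - 3" "p < n - 2" "n - 2 - p = 2" using 2 n k by arith+
    have a2: "\<not> Sh (n-2) (k-1) 2 ! p" using 2 n k by (simp add: Sh_nth)
    have w0: "\<not> ((topw (n-2) k @ [False]) @ [False]) ! p" using wn[unfolded ne(4)] by simp
    show ?thesis using lhs rhs w0 a2 ne by simp
  next
    case 3
    have ne: "p \<noteq> n - 1" "p < n - 2" using 3 n k by arith+
    have "\<not> p < n - 2 - 2" "p < n - 2" "2 \<le> n - 2" using 3 n k by arith+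
    then have a2: "\<not> Sh (n-2) (k-1) 2 ! p" using Sh_nth[of p "n-2" 2 "k-1"] by simp
    show ?thesis using lhs rhs a2 ne 3 by simp
  next
    case 4
    have ne: "p \<noteq> n - 1" "\<not> p < n - 2" "p \<noteq> Suc (n - 2)" using 4 n k by arith+
    show ?thesis using lhs rhs wn ne 4 by simp
  next
    case 5
    have ne: "\<not> p < n - 2" "p = Suc (n - 2)" using 5 n k by arith+
    show ?thesis using lhs rhs ne 5 by simp
  qed
qed

lemma id_c:
  assumes k: "k \<ge> 1" and n: "2*k \<le> n"
  shows "hom_trans (pk (n-1) k @ [False]) (2*k-2) (n-1) = pk (n-2) (k-1) @ [False, True]"
proof (rule nth_equalityI)
  show "length (hom_trans (pk (n-1) k @ [False]) (2*k-2) (n-1)) = length (pk (n-2) (k-1) @ [False, True])"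
    using n k by simp
  fix p assume "p < length (hom_trans (pk (n-1) k @ [False]) (2*k-2) (n-1))"
  then have p: "p < n" using n k by simp
  have l: "length (pk (n-1) k @ [False]) = n" using n k by simp
  have wn: "(pk (n-1) k @ [False]) ! p = (p < n - 1 \<and> p < 2*k \<and> even p)"
    using p n k by (auto simp: nth_append pk_nth)
  have lhs: "hom_trans (pk (n-1) k @ [False]) (2*k-2) (n-1) ! p
      = (p = n - 1 \<or> (p \<noteq> 2*k-2 \<and> (pk (n-1) k @ [False]) ! p))"
    using p l n k by (auto simp: hom_trans_nth)
  have rhs: "(pk (n-2) (k-1) @ [False, True]) ! p = (if p < n - 2 then pk (n-2) (k-1) ! p else p = Suc (n-2))"
    by (rule nth01) (use n k p in simp_all)
  consider "p = n - 1" | "p = 2*k - 2" | "p < n - 2 \<and> p \<noteq> 2*k-2" | "p = n - 2 \<and> p \<noteq> 2*k-2" using p n k by arith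
  then show "hom_trans (pk (n-1) k @ [False]) (2*k-2) (n-1) ! p = (pk (n-2) (k-1) @ [False, True]) ! p"
  proof cases
    case 1
    have ne: "\<not> p < n - 2" "p = Suc (n - 2)" using 1 n k by arith+
    show ?thesis using lhs rhs ne 1 by simp
  next
    case 2
    have ne: "p \<noteq> n - 1" "p \<noteq> Suc (n - 2)" using 2 n k by arith+
    have "\<not> (p < n - 2 \<and> pk (n-2) (k-1) ! p)" using 2 by (auto simp: pk_nth)
    then show ?thesis using lhs rhs ne 2 by auto
  next
    case 3
    have ne: "p \<noteq> n - 1" "p < n - 1" using 3 n k by arith+
    have "(p < 2*k \<and> even p) = (p < 2*(k-1) \<and> even p)" using 3 k by presburger
    then show ?thesis using lhs rhs wn ne 3 by (simp add: pk_nth)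
  next
    case 4
    have ne: "p \<noteq> n - 1" "p < n - 1" "\<not> p < n - 2" "p \<noteq> Suc (n - 2)" using 4 n k by arith+
    have "\<not> (p < 2*k \<and> even p)" using 4 n k by presburger
    then show ?thesis using lhs rhs wn ne 4 by simp
  qed
qed


lemma stuck_top:
  assumes k2: "k \<ge> 2" and n: "2*k \<le> n"
    and c: "(i, j) \<in> greedy_cands (Fib_words n k) L (topw (n-2) (k-1) @ [False, True])"
    and i: "i = n - 1"
  shows False
proof -
  define m where "m = n - 2"
  define w where "w = topw m (k-1)"
  have m2: "m \<ge> 2" using n k2 by (simp add: m_def)
  have nm: "n = m + 2" using n k2 by (simp add: m_def)
  have lw: "length w = m" by (simp add: w_def)
  have wlast: "w ! (m-1)" using k2 m2 by (simp add: w_def topw_nth)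
  have c': "(i, j) \<in> greedy_cands (Fib_words n k) L (w @ [False, True])" using c by (simp add: w_def m_def)
  have ok: "hom_trans_ok (w @ [False, True]) i j" and inS: "hom_trans (w @ [False, True]) i j \<in> Fib_words n k"
    using c' by (auto simp: greedy_cands_def)
  have jb: "j < m + 2" "\<not> (w @ [False, True]) ! j" "i \<noteq> j"
    and btw: "\<forall>p. min i j < p \<and> p < max i j \<longrightarrow> \<not> (w @ [False, True]) ! p"
    using ok lw nm by (auto simp: hom_trans_ok_def)
  have wl2: "(w @ [False, True]) ! (m - 1)" using wlast lw m2 by (simp add: nth_append)
  have jm: "j = m"
  proof -
    have "j \<noteq> Suc m" using jb(3) i nm by simp
    moreover have "\<not> j < m - 1"
    proof
      assume "j < m - 1"
      then have "min i j < m - 1 \<and> m - 1 < max i j" using i nm m2 by simp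
      then show False using btw wl2 by blast
    qed
    moreover have "j \<noteq> m - 1" using jb(2) wl2 by auto
    ultimately show ?thesis using jb(1) by arith
  qed
  let ?t = "hom_trans (w @ [False, True]) i j"
  have t1: "?t ! m" using jm i lw nm by (simp add: hom_trans_nth)
  have t2: "?t ! (m - 1)" using jm i lw wl2 m2 nm by (simp add: hom_trans_nth)
  have adj: "\<forall>p. Suc p < n \<longrightarrow> \<not> (?t ! p \<and> ?t ! Suc p)" using inS by (simp add: Fib_words_def)
  have sm: "Suc (m - 1) = m" using m2 by simp
  have "Suc (m - 1) < n" using m2 nm by simp
  then have "\<not> (?t ! (m - 1) \<and> ?t ! Suc (m - 1))" using adj by blast
  then show False using t1 t2 sm by simp
qed

lemma trans_F:
  assumes wS: "e @ [False] \<in> Fib_words n k" and le: "length e = n - 1" and n1: "n \<ge> 1"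
    and r: "r < n - 1" "e ! r" "\<forall>p. r < p \<and> p < n - 1 \<longrightarrow> \<not> e ! p"
    and L1: "\<forall>u\<in>set L1. \<not> last u"
    and only: "\<And>i j. (i, j) \<in> greedy_cands (Fib_words n k) L1 (e @ [False]) \<Longrightarrow>
        j = n - 1 \<and> i < n - 1 \<and> e ! i \<and> (\<forall>p. i < p \<and> p < n - 1 \<longrightarrow> \<not> e ! p)"
  shows "greedy_next (Fib_words n k) L1 (e @ [False]) = Some (hom_trans (e @ [False]) r (n - 1))"
proof -
  define w where "w = e @ [False]"
  have lw: "length w = n" using le n1 by (simp add: w_def)
  have wn: "w ! p = (p < n - 1 \<and> e ! p)" if "p < n" for p
    using that le n1 by (auto simp: w_def nth_append)
  have ok: "hom_trans_ok w r (n - 1)"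
    unfolding hom_trans_ok_def using lw wn r n1 by auto
  define t where "t = hom_trans w r (n - 1)"
  have lt: "length t = n" using lw by (simp add: t_def)
  have tS: "t \<in> Fib_words n k" unfolding t_def w_def
  proof (rule hom_trans_in[OF wS])
    show "hom_trans_ok (e @ [False]) r (n - 1)" using ok by (simp add: w_def)
    show "Suc (n - 1) < n \<Longrightarrow> Suc (n - 1) = r \<or> \<not> (e @ [False]) ! Suc (n - 1)" by simp
    show "0 < n - 1 \<Longrightarrow> n - 1 - 1 = r \<or> \<not> (e @ [False]) ! (n - 1 - 1)"
    proof -
      assume "0 < n - 1"
      show ?thesis
      proof (cases "n - 1 - 1 = r")
        case True then show ?thesis by simp
      next
        case False
        then have "r < n - 1 - 1" "n - 1 - 1 < n - 1" using r n1 \<open>0 < n - 1\<close> by arith+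
        then have "\<not> e ! (n - 1 - 1)" using r by blast
        then show ?thesis using wn[of "n - 1 - 1"] n1 by (simp add: w_def)
      qed
    qed
  qed
  have "t ! (n - 1)" using lw r n1 by (simp add: t_def hom_trans_nth)
  then have tl: "last t" using last_nth_n[OF lt n1] by simp
  have tnot: "t \<notin> set L1" using L1 tl by auto
  have cand: "(r, n - 1) \<in> greedy_cands (Fib_words n k) L1 w"
    using ok tS tnot by (simp add: greedy_cands_def t_def)
  have ieq: "i' = r \<and> j' = n - 1" if "(i', j') \<in> greedy_cands (Fib_words n k) L1 w" for i' j'
  proof -
    have o: "j' = n - 1" "i' < n - 1" "e ! i'" "\<forall>p. i' < p \<and> p < n - 1 \<longrightarrow> \<not> e ! p"
      using only[of i' j'] that by (auto simp: w_def)
    have "\<not> i' < r" using o(4) r by blast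
    moreover have "\<not> r < i'" using r(3) o(2,3) by blast
    ultimately show ?thesis using o(1) by simp
  qed
  have "greedy_next (Fib_words n k) L1 w = Some t"
    unfolding t_def by (rule gn_Some[OF cand]) (use ieq in auto)
  then show ?thesis by (simp add: w_def t_def)
qed


lemma case_F:
  assumes a: "a \<in> Fib_words n k" and k: "k \<ge> 1" and n: "2*k \<le> n" and la: "\<not> last a"
    and IH1: "GoodN (n-1)" and IH2: "GoodN (n-2)"
  shows "Good n k a"
proof -
  have n2: "n \<ge> 2" using n k by simp
  have S0: "Fib_words n k = Fib_words (Suc (n-1)) k" using n2 by simp
  have nn: "(n-2)+2 = n" "Suc (k-1) = k" using n2 k by auto
  have S: "Fib_words n k = Fib_words ((n-2)+2) (Suc (k-1))" unfolding nn ..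
  define a' where "a' = butlast a"
  have dec: "a = a' @ [False]" "a' \<in> Fib_words (n-1) k"
    using fib_last_F[OF a _ la] n2 by (auto simp: a'_def)
  define M1 where "M1 = G (n-1) k a'"
  have gd1: "Good (n-1) k a'" using IH1 dec(2) by (simp add: GoodN_def)
  have spM1: "suffix_partitioned M1" using gd1 by (simp add: Good_def M1_def)
  have rM1: "run (Fib_words (n-1) k) M1" "hd M1 = a'" "set M1 \<subseteq> Fib_words (n-1) k"
    using greedy_run[OF finite_Fib dec(2)] by (simp_all add: M1_def)
  have M1ne: "M1 \<noteq> []" using rM1 by (simp add: run_def)
  define e where "e = last M1"
  have eS: "e \<in> Fib_words (n-1) k" using M1ne rM1(3) unfolding e_def by (metis last_in_set subsetD)
  have le: "length e = n - 1" using eS fib_len by blast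
  have ecases: "e = topw (n-1) k \<or> (odd k \<and> 2*k + 1 \<le> n \<and> e = topw (n-2) k @ [False]) \<or> (even k \<and> e = pk (n-1) k)"
  proof (cases "a' = topw (n-1) k")
    case False
    then show ?thesis using gd1 by (simp add: Good_def M1_def e_def)
  next
    case True
    then have e1: "e = endC (n-1) k" using gd1 by (simp add: Good_def M1_def e_def)
    show ?thesis
    proof (cases "even k")
      case True then show ?thesis using e1 by (simp add: endC_def)
    next
      case False
      show ?thesis
      proof (cases "n - 1 + 1 = 2*k")
        case True then show ?thesis using e1 False by (simp add: endC_def)
      next
        case ne: False
        then have "2*k + 1 \<le> n" using n k by arith
        moreover have "e = topw (n-2) k @ [False]" using e1 False ne by (simp add: endC_def numeral_2_eq_2)
        ultimately show ?thesis using False by simp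
      qed
    qed
  qed
  obtain r where r: "r < n - 1" "e ! r" "\<forall>p. r < p \<and> p < n - 1 \<longrightarrow> \<not> e ! p"
    and tform: "k \<ge> 2 \<longrightarrow> (\<exists>\<gamma>. hom_trans (e @ [False]) r (n-1) = \<gamma> @ [False, True] \<and> \<not> last \<gamma> \<and>
        (\<gamma> = pk (n-2) (k-1) \<or> (\<exists>d. \<gamma> = Sh (n-2) (k-1) d)))"
  proof -
    consider "e = topw (n-1) k" | "odd k" "2*k + 1 \<le> n" "e = topw (n-2) k @ [False]" | "even k" "e = pk (n-1) k"
      using ecases by blast
    then show ?thesis
    proof cases
      case 1
      have r1: "n - 2 < n - 1" "e ! (n - 2)" "\<forall>p. n - 2 < p \<and> p < n - 1 \<longrightarrow> \<not> e ! p"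
        using 1 n2 k by (auto simp: topw_nth)
      have "k \<ge> 2 \<longrightarrow> (\<exists>\<gamma>. hom_trans (e @ [False]) (n-2) (n-1) = \<gamma> @ [False, True] \<and> \<not> last \<gamma> \<and>
        (\<gamma> = pk (n-2) (k-1) \<or> (\<exists>d. \<gamma> = Sh (n-2) (k-1) d)))"
      proof
        assume k2: "k \<ge> 2"
        have "hom_trans (e @ [False]) (n-2) (n-1) = Sh (n-2) (k-1) 1 @ [False, True]"
          using id_a[OF k2 n] 1 by simp
        moreover have "\<not> last (Sh (n-2) (k-1) 1)" using Sh_last[of "n-2" "k-1" 0] by simp
        ultimately show "\<exists>\<gamma>. hom_trans (e @ [False]) (n-2) (n-1) = \<gamma> @ [False, True] \<and> \<not> last \<gamma> \<and>
          (\<gamma> = pk (n-2) (k-1) \<or> (\<exists>d. \<gamma> = Sh (n-2) (k-1) d))" by blast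
      qed
      then show ?thesis using that r1 by blast
    next
      case 2
      have r1: "n - 3 < n - 1" "e ! (n - 3)" "\<forall>p. n - 3 < p \<and> p < n - 1 \<longrightarrow> \<not> e ! p"
      proof -
        show "n - 3 < n - 1" using 2 k by arith
        have "n - 3 < n - 2" "n - 2 - 2*k \<le> n - 3" "n - 2 - (n - 3) = 1" using 2 k by arith+
        then show "e ! (n - 3)" using 2 by (simp add: nth_append topw_nth)
        show "\<forall>p. n - 3 < p \<and> p < n - 1 \<longrightarrow> \<not> e ! p"
        proof (intro allI impI)
          fix p assume "n - 3 < p \<and> p < n - 1"
          then have "p = n - 2" using 2 k by arith
          then show "\<not> e ! p" using 2 by (simp add: nth_append)
        qed
      qed
      have "k \<ge> 2 \<longrightarrow> (\<exists>\<gamma>. hom_trans (e @ [False]) (n-3) (n-1) = \<gamma> @ [False, True] \<and> \<not> last \<gamma> \<and>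
        (\<gamma> = pk (n-2) (k-1) \<or> (\<exists>d. \<gamma> = Sh (n-2) (k-1) d)))"
      proof
        assume k2: "k \<ge> 2"
        have "hom_trans (e @ [False]) (n-3) (n-1) = Sh (n-2) (k-1) 2 @ [False, True]"
          using id_b[OF k2 2(2)] 2 by simp
        moreover have "\<not> last (Sh (n-2) (k-1) 2)" using Sh_last[of "n-2" "k-1" 1] by (simp add: numeral_2_eq_2)
        ultimately show "\<exists>\<gamma>. hom_trans (e @ [False]) (n-3) (n-1) = \<gamma> @ [False, True] \<and> \<not> last \<gamma> \<and>
          (\<gamma> = pk (n-2) (k-1) \<or> (\<exists>d. \<gamma> = Sh (n-2) (k-1) d))" by blast
      qed
      then show ?thesis using that r1 by blast
    next
      case 3
      have k2: "k \<ge> 2" using 3 k by presburger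
      have r1: "2*k - 2 < n - 1" "e ! (2*k - 2)" "\<forall>p. 2*k - 2 < p \<and> p < n - 1 \<longrightarrow> \<not> e ! p"
      proof -
        show "2*k - 2 < n - 1" using n k by arith
        then show "e ! (2*k - 2)" using 3 k by (simp add: pk_nth)
        show "\<forall>p. 2*k - 2 < p \<and> p < n - 1 \<longrightarrow> \<not> e ! p"
        proof (intro allI impI)
          fix p assume p: "2*k - 2 < p \<and> p < n - 1"
          have "\<not> (p < 2*k \<and> even p)" using p k by presburger
          then show "\<not> e ! p" using 3 p by (simp add: pk_nth)
        qed
      qed
      have "hom_trans (e @ [False]) (2*k-2) (n-1) = pk (n-2) (k-1) @ [False, True]"
        using id_c[OF k n] 3 by simp
      moreover have "\<not> last (pk (n-2) (k-1))"
      proof -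
        have "n - 2 \<ge> 1" using n k2 by arith
        then have "last (pk (n-2) (k-1)) = pk (n-2) (k-1) ! (n - 2 - 1)" using last_nth_n[of "pk (n-2) (k-1)" "n-2"] by simp
        moreover have "\<not> (n - 2 - 1 < 2*(k-1) \<and> even (n - 2 - 1))" using n k2 by presburger
        ultimately show ?thesis using \<open>n - 2 \<ge> 1\<close> by (simp add: pk_nth)
      qed
      ultimately have "k \<ge> 2 \<longrightarrow> (\<exists>\<gamma>. hom_trans (e @ [False]) (2*k-2) (n-1) = \<gamma> @ [False, True] \<and> \<not> last \<gamma> \<and>
        (\<gamma> = pk (n-2) (k-1) \<or> (\<exists>d. \<gamma> = Sh (n-2) (k-1) d)))" by blast
      then show ?thesis using that r1 by blast
    qed
  qed
  define L1 where "L1 = map (\<lambda>u. u @ [False]) M1"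
  have L1last: "\<forall>u\<in>set L1. \<not> last u" by (simp add: L1_def)
  have lastL1: "last L1 = e @ [False]" using M1ne by (simp add: L1_def last_map e_def)
  have gnM1: "greedy_next (Fib_words (n-1) k) M1 e = None" using rM1 by (simp add: run_def e_def)
  have wS: "e @ [False] \<in> Fib_words n k" using eS S0 fib_snoc0[OF le] by simp
  have only: "j = n - 1 \<and> i < n - 1 \<and> e ! i \<and> (\<forall>p. i < p \<and> p < n - 1 \<longrightarrow> \<not> e ! p)"
    if c: "(i, j) \<in> greedy_cands (Fib_words n k) L1 (e @ [False])" for i j
  proof -
    have c': "(i, j) \<in> greedy_cands (Fib_words (Suc (n-1)) k) ([] @ map (\<lambda>u. u @ [False]) M1) (e @ [False])"
      using c S0 by (simp add: L1_def)
    show ?thesis using stuck0[OF gnM1 le Oc_nil c'] .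
  qed
  define t where "t = hom_trans (e @ [False]) r (n-1)"
  have tr: "greedy_next (Fib_words n k) L1 (e @ [False]) = Some t"
    unfolding t_def by (rule trans_F[OF wS le _ r L1last only]) (use n2 in auto)
  have tS: "t \<in> Fib_words n k" using gn_Some_mem(1)[OF tr] .
  have lt: "length t = n" using le n2 by (simp add: t_def)
  have "t ! (n-1)" using le r n2 by (simp add: t_def hom_trans_nth)
  then have tl: "last t" using last_nth_n[OF lt] n2 by simp
  define \<gamma> where "\<gamma> = take (n-2) t"
  have tdec: "t = \<gamma> @ [False, True]" "\<gamma> \<in> Fib_words (n-2) (k-1)"
    using fib_last_T[OF tS n2 tl] by (auto simp: \<gamma>_def)
  have gW: "k - 1 \<le> 1 \<or> \<gamma> = pk (n-2) (k-1) \<or> (\<exists>d. \<gamma> = Sh (n-2) (k-1) d)"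
  proof (cases "k \<ge> 2")
    case True
    then obtain \<gamma>' where g': "t = \<gamma>' @ [False, True]"
      "\<gamma>' = pk (n-2) (k-1) \<or> (\<exists>d. \<gamma>' = Sh (n-2) (k-1) d)"
      using tform unfolding t_def by blast
    have "\<gamma>' = \<gamma>" using g'(1) tdec(1) by simp
    then show ?thesis using g'(2) by blast
  next
    case False then show ?thesis using k by simp
  qed
  have gne: "k \<ge> 2 \<Longrightarrow> \<gamma> \<noteq> topw (n-2) (k-1)"
  proof -
    assume k2: "k \<ge> 2"
    then obtain \<gamma>' where g': "t = \<gamma>' @ [False, True]" "\<not> last \<gamma>'" using tform unfolding t_def by blast
    have "\<gamma>' = \<gamma>" using g'(1) tdec(1) by simp
    moreover have "last (topw (n-2) (k-1))" using last_topw[of "k-1" "n-2"] k2 n by simp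
    ultimately show ?thesis using g'(2) by auto
  qed
  define M2 where "M2 = G (n-2) (k-1) \<gamma>"
  have gd2: "Good (n-2) (k-1) \<gamma>" using IH2 tdec(2) by (simp add: GoodN_def)
  have setM2: "set M2 = Fib_words (n-2) (k-1)" using gd2 gW unfolding Good_def M2_def by blast
  have spM2: "suffix_partitioned M2" using gd2 by (simp add: Good_def M2_def)
  have lastM2: "last M2 = topw (n-2) (k-1)"
  proof (cases "k \<ge> 2")
    case True
    then show ?thesis using gd2 gne by (simp add: Good_def M2_def)
  next
    case False
    then have k1: "k - 1 = 0" using k by simp
    then have "\<gamma> = topw (n-2) 0" using fib_k0 tdec(2) by simp
    then have "last M2 = endC (n-2) 0" using gd2 k1 by (simp add: Good_def M2_def)
    then show ?thesis using k1 by (simp add: endC_def pk0)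
  qed
  have rM2: "run (Fib_words (n-2) (k-1)) M2" "hd M2 = \<gamma>" "set M2 \<subseteq> Fib_words (n-2) (k-1)"
    using greedy_run[OF finite_Fib tdec(2)] by (simp_all add: M2_def)
  have M2ne: "M2 \<noteq> []" using rM2 by (simp add: run_def)
  define L2 where "L2 = map (\<lambda>u. u @ [False, True]) M2"
  define L where "L = L1 @ L2"
  have st1: "steps_ok (Fib_words n k) [] L1"
    unfolding S0 L1_def by (rule steps0[OF _ rM1(3) Oc_nil]) (use rM1 in \<open>simp add: run_def\<close>)
  have st2: "steps_ok (Fib_words n k) ([] @ L1) L2"
    unfolding S L2_def by (rule steps01[OF _ rM2(3)]) (use rM2 in \<open>auto simp: run_def L1_def\<close>)
  have hdL2: "hd L2 = t" using M2ne rM2(2) tdec(1) by (simp add: L2_def hd_map)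
  have st: "steps_ok (Fib_words n k) [] L"
    unfolding L_def by (rule steps_append[OF st1 st2]) (use tr lastL1 hdL2 in simp)
  have lastL: "last L = topw (n-2) (k-1) @ [False, True]" using M2ne lastM2 by (simp add: L_def L2_def last_map)
  have gnM2: "greedy_next (Fib_words (n-2) (k-1)) M2 (topw (n-2) (k-1)) = None" using rM2 lastM2 by (simp add: run_def)
  have stuck: "greedy_cands (Fib_words n k) L (topw (n-2) (k-1) @ [False, True]) = {}"
  proof (rule ccontr)
    assume "greedy_cands (Fib_words n k) L (topw (n-2) (k-1) @ [False, True]) \<noteq> {}"
    then obtain i j where c: "(i, j) \<in> greedy_cands (Fib_words n k) L (topw (n-2) (k-1) @ [False, True])" by auto
    have c': "(i, j) \<in> greedy_cands (Fib_words ((n-2)+2) (Suc (k-1))) (L1 @ map (\<lambda>u. u @ [False, True]) M2) (topw (n-2) (k-1) @ [False, True])"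
      using c S by (simp add: L_def L2_def)
    have Oc: "\<forall>u\<in>set L1. \<forall>x. u \<noteq> x @ [False, True]" using Oc01 by (simp add: L1_def)
    have ii: "i = Suc (n-2)" using stuck01[OF gnM2 _ Oc c'] by simp
    then have ii': "i = n - 1" using n2 by simp
    show False
    proof (cases "k \<ge> 2")
      case True
      show False by (rule stuck_top[OF True n c ii'])
    next
      case False
      then have k1: "k = 1" using k by simp
      let ?w = "topw (n-2) (k-1) @ [False, True]"
      let ?t = "hom_trans ?w i j"
      have ok: "hom_trans_ok ?w i j" and tS': "?t \<in> Fib_words n k" and tn: "?t \<notin> set L"
        using c by (auto simp: greedy_cands_def)
      have ij: "i \<noteq> j" using ok by (auto simp: hom_trans_ok_def)
      have lt': "length ?t = n" using n2 by simp
      have "\<not> ?t ! (n-1)" using ii' ij n2 by (simp add: hom_trans_nth)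
      then have tl': "\<not> last ?t" using last_nth_n[OF lt'] n2 by simp
      from fib_last_F[OF tS' _ tl'] n2
      have td: "?t = butlast ?t @ [False]" "butlast ?t \<in> Fib_words (n-1) k" by auto
      have "set M1 = Fib_words (n-1) k" using gd1 k1 by (simp add: Good_def M1_def)
      then have "?t \<in> set L1" using td by (auto simp: L1_def)
      then show False using tn by (simp add: L_def)
    qed
  qed
  have Lne: "L \<noteq> []" using M1ne by (simp add: L_def L1_def)
  have rL: "run (Fib_words n k) L" unfolding run_def using Lne st stuck lastL by (simp add: gn_None)
  have hdL: "hd L = a" using M1ne rM1(2) dec(1) by (simp add: L_def L1_def hd_map)
  have g: "G n k a = L" using greedy_eq_run[OF finite_Fib rL] hdL a by simp
  have sp: "suffix_partitioned L" unfolding L_def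
  proof (rule sp_append)
    show "suffix_partitioned L1" unfolding L1_def by (rule sp_map[OF spM1])
    show "suffix_partitioned L2" unfolding L2_def by (rule sp_map[OF spM2])
    show "\<forall>u\<in>set L1. \<forall>v\<in>set L2. last u \<noteq> last v" by (auto simp: L1_def L2_def)
  qed
  have topeq: "topw n k = topw (n-2) (k-1) @ [False, True]"
    using topw_snoc[of "n-2" "k-1"] unfolding nn by simp
  have ane: "a \<noteq> topw n k"
  proof
    assume "a = topw n k"
    then have "last a" using last_topw[of k n] k n2 by simp
    then show False using la by simp
  qed
  have W: "set L = Fib_words n k" if h: "k \<le> 1 \<or> a = pk n k \<or> (\<exists>d. a = Sh n k d)"
  proof -
    have "k \<le> 1 \<or> a' = pk (n-1) k \<or> (\<exists>d. a' = Sh (n-1) k d)"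
    proof -
      consider "k \<le> 1" | "a = pk n k" | d where "a = Sh n k d" using h by blast
      then show ?thesis
      proof cases
        case 1 then show ?thesis by simp
      next
        case 2
        have "pk n k = pk (n-1) k @ [n - 1 < 2*k \<and> even (n-1)]" using pk_snoc[of "n-1" k] n2 by simp
        then have "a' = pk (n-1) k" using 2 by (simp add: a'_def)
        then show ?thesis by simp
      next
        case 3
        show ?thesis
        proof (cases d)
          case 0 then show ?thesis using 3 ane by (simp add: Sh0)
        next
          case (Suc d')
          have "Sh n k d = Sh (n-1) k d' @ [False]" using Sh_snoc[of "n-1" k d'] Suc n2 by simp
          then have "a' = Sh (n-1) k d'" using 3 by (simp add: a'_def)
          then show ?thesis by blast
        qed
      qed
    qed
    then have "set M1 = Fib_words (n-1) k" using gd1 unfolding Good_def M1_def by blast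
    then show ?thesis using fib_split[of n k] n2 k setM2 by (simp add: L_def L1_def L2_def Un_commute)
  qed
  show ?thesis unfolding Good_def g using sp lastL topeq ane W by simp
qed


lemma all_good: "GoodN n"
proof (induction n rule: less_induct)
  case (less n)
  show ?case unfolding GoodN_def
  proof (intro allI impI)
    fix k a assume a: "a \<in> Fib_words n k"
    have bd: "2*k \<le> n + 1" using fib_bound[OF a] .
    show "Good n k a"
    proof (cases "k = 0")
      case True then show ?thesis using case_k0 a by simp
    next
      case k0: False
      then have k: "k \<ge> 1" by simp
      show ?thesis
      proof (cases "n + 1 = 2*k")
        case True then show ?thesis using case_single[OF a] by simp
      next
        case False
        then have n: "2*k \<le> n" using bd by arith
        then have n2: "n \<ge> 2" using k by simp
        have IH1: "GoodN (n-1)" using less n2 by simp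
        have IH2: "GoodN (n-2)" using less n2 by simp
        show ?thesis
        proof (cases "last a")
          case la: True
          show ?thesis
          proof (cases "take (n-2) a = topw (n-2) (k-1)")
            case True
            have "a = take (n-2) a @ [False, True]" using fib_last_T[OF a n2 la] by blast
            also have "\<dots> = topw (n-2) (k-1) @ [False, True]" using True by simp
            also have "\<dots> = topw ((n-2)+2) (Suc (k-1))" by (rule topw_snoc[symmetric])
            also have "(n-2)+2 = n" using n2 by simp
            also have "Suc (k-1) = k" using k by simp
            finally have at: "a = topw n k" .
            show ?thesis using case_T_ii[OF _ k n IH2 IH1] a at by simp
          next
            case False
            show ?thesis by (rule case_T_i[OF a k n la False IH2])
          qed
        next
          case False
          show ?thesis by (rule case_F[OF a k n False IH1 IH2])
        qed
      qed
    qed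
  qed
qed

theorem lemma2:
  fixes n k :: nat and \<alpha> :: "bool list"
  assumes "2 * k \<le> n + 1"
    and "\<alpha> \<in> Fib_words n k"
  shows "suffix_partitioned (Fgreedy n k \<alpha>)"
proof -
  have "Good n k \<alpha>" using all_good assms(2) by (simp add: GoodN_def)
  then show ?thesis by (simp add: Good_def Fgreedy_def)
qed


end
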